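(* Let $g:[0,a_0]\to[0,+\infty)$ be a Lipschitz function. For $0\le a_1<a_2\le a_0$ and $b>0$ set $\Gamma(a_1,a_2)=\{(x,g(x)):x\in(a_1,a_2)\}$ and $R(a_1,a_2,b)=\{(x,y):x\in(a_1,a_2),\ y\in(g(x),g(x)+b)\}$. Then $$\lim_{|a_2-a_1|\to0}K\big(\Gamma(a_1,a_2),R(a_1,a_2,b)\big)=+\infty\quad\text{uniformly with respect to }b>0.$$
   Context: For an open set $A$ with Lipschitz boundary and $G\subset\partial A$ with nonempty relative interior in $\partial A$, $K(G,A)=\inf\{\int_A|\nabla v|^2\,dx\,dy: v\in H^1(A),\ \int_G v^2\,d\mathcal{H}^1=1,\ v=0\text{ on }\partial A\setminus G\}$, where $\mathcal{H}^1$ is the one-dimensional Hausdorff measure and boundary values are traces. *)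

theory Defs
  imports "HOL-Analysis.Analysis"
begin

type_synonym pt = "real \<times> real"

text \<open>C-infinity functions on the plane: differentiable everywhere, with all partial
  derivatives again C-infinity (coinductive, i.e. derivatives of every order exist).\<close>
coinductive smooth2 :: "(pt \<Rightarrow> real) \<Rightarrow> bool" where
  "(\<And>x. (f has_derivative (\<lambda>h. Df x \<bullet> h)) (at x)) \<Longrightarrow>
   (\<And>e. e \<in> Basis \<Longrightarrow> smooth2 (\<lambda>x. Df x \<bullet> e)) \<Longrightarrow> smooth2 f"

definition grad :: "(pt \<Rightarrow> real) \<Rightarrow> pt \<Rightarrow> pt" where
  "grad f x = (THE D. (f has_derivative (\<lambda>h. D \<bullet> h)) (at x))"

definition test_fun :: "pt set \<Rightarrow> (pt \<Rightarrow> real) \<Rightarrow> bool" where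
  "test_fun A \<phi> \<longleftrightarrow> smooth2 \<phi> \<and> compact (closure {x. \<phi> x \<noteq> 0}) \<and> closure {x. \<phi> x \<noteq> 0} \<subseteq> A"

definition L2_on :: "pt set \<Rightarrow> (pt \<Rightarrow> real) \<Rightarrow> bool" where
  "L2_on A v \<longleftrightarrow> set_borel_measurable lborel A v \<and> set_integrable lborel A (\<lambda>x. (v x)\<^sup>2)"

definition H1_weak_grad :: "pt set \<Rightarrow> (pt \<Rightarrow> real) \<Rightarrow> (pt \<Rightarrow> pt) \<Rightarrow> bool" where
  "H1_weak_grad A v w \<longleftrightarrow> L2_on A v \<and> (\<forall>e\<in>Basis. L2_on A (\<lambda>x. w x \<bullet> e)) \<and>
     (\<forall>\<phi>. test_fun A \<phi> \<longrightarrow> (\<forall>e\<in>Basis.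
        (LINT x:A|lborel. v x * (grad \<phi> x \<bullet> e)) = - (LINT x:A|lborel. \<phi> x * (w x \<bullet> e))))"

text \<open>One-dimensional Hausdorff (outer) measure in the plane, normalised so that
  it is the length of segments: H^1(S) = lim_{delta->0} inf sum diam(C_i).\<close>
definition hausdorff1_pre :: "real \<Rightarrow> pt set \<Rightarrow> ennreal" where
  "hausdorff1_pre \<delta> S = (INF C \<in> {C :: nat \<Rightarrow> pt set. S \<subseteq> (\<Union>i. C i) \<and>
       (\<forall>i. bounded (C i) \<and> diameter (C i) \<le> \<delta>)}. (\<Sum>i. ennreal (diameter (C i))))"

definition hausdorff1 :: "pt set \<Rightarrow> ennreal" where
  "hausdorff1 S = (SUP \<delta>\<in>{0<..}. hausdorff1_pre \<delta> S)"

definition H1 :: "pt measure" where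
  "H1 = measure_of UNIV (sets borel) hausdorff1"

text \<open>Trace (in the sense of extension by continuity from smooth functions):
  t is the boundary trace of v (with weak gradient w) on the boundary of A iff there
  are C-infinity functions u_n converging to v in H^1(A) whose boundary restrictions
  converge to t in L^2(boundary of A, H^1).\<close>
definition has_trace :: "pt set \<Rightarrow> (pt \<Rightarrow> real) \<Rightarrow> (pt \<Rightarrow> pt) \<Rightarrow> (pt \<Rightarrow> real) \<Rightarrow> bool" where
  "has_trace A v w t \<longleftrightarrow> t \<in> borel_measurable borel \<and>
     (\<exists>u :: nat \<Rightarrow> pt \<Rightarrow> real. (\<forall>n. smooth2 (u n)) \<and>
        (\<lambda>n. \<integral>\<^sup>+ x\<in>A. ennreal ((u n x - v x)\<^sup>2 + (norm (grad (u n) x - w x))\<^sup>2) \<partial>lborel)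
          \<longlonglongrightarrow> 0 \<and>
        (\<lambda>n. \<integral>\<^sup>+ z\<in>frontier A. ennreal ((u n z - t z)\<^sup>2) \<partial>H1) \<longlonglongrightarrow> 0)"

definition K_const :: "pt set \<Rightarrow> pt set \<Rightarrow> ereal" where
  "K_const G A = Inf {ereal (LINT x:A|lborel. (norm (w x))\<^sup>2) | v w t.
      H1_weak_grad A v w \<and> has_trace A v w t \<and>
      (\<integral>\<^sup>+ z\<in>G. ennreal ((t z)\<^sup>2) \<partial>H1) = 1 \<and>
      (AE z in H1. z \<in> frontier A - G \<longrightarrow> t z = 0)}"

definition Gamma_set :: "(real \<Rightarrow> real) \<Rightarrow> real \<Rightarrow> real \<Rightarrow> pt set" where
  "Gamma_set g a1 a2 = {(x, g x) | x. a1 < x \<and> x < a2}"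

definition R_set :: "(real \<Rightarrow> real) \<Rightarrow> real \<Rightarrow> real \<Rightarrow> real \<Rightarrow> pt set" where
  "R_set g a1 a2 b = {(x, y). a1 < x \<and> x < a2 \<and> g x < y \<and> y < g x + b}"

end

theory Submission
  imports Defs
begin

lemma smooth2_D:
  assumes "smooth2 u"
  obtains Df where "\<And>x. (u has_derivative (\<lambda>h. Df x \<bullet> h)) (at x)"
    "\<And>e. e \<in> Basis \<Longrightarrow> smooth2 (\<lambda>x. Df x \<bullet> e)"
  using assms by (cases rule: smooth2.cases) blast

lemma grad_eqI:
  assumes "(f has_derivative (\<lambda>h. D \<bullet> h)) (at x)"
  shows "grad f x = D"
  unfolding grad_def
proof (rule the_equality)
  fix D' assume "(f has_derivative (\<lambda>h. D' \<bullet> h)) (at x)"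
  from has_derivative_unique[OF this assms] have "\<And>h. D' \<bullet> h = D \<bullet> h" by metis
  then show "D' = D" by (metis euclidean_eqI)
qed (rule assms)

lemma smooth2_grad:
  assumes "smooth2 u"
  shows "(u has_derivative (\<lambda>h. grad u x \<bullet> h)) (at x)"
proof -
  obtain Df where D: "\<And>x. (u has_derivative (\<lambda>h. Df x \<bullet> h)) (at x)" using smooth2_D[OF assms] by blast
  show ?thesis using D[of x] grad_eqI[OF D[of x]] by simp
qed

lemma smooth2_cont: "smooth2 u \<Longrightarrow> continuous_on UNIV u"
  by (metis smooth2_grad has_derivative_continuous continuous_at_imp_continuous_on)

lemma smooth2_grad_cont:
  assumes "smooth2 u"
  shows "continuous_on UNIV (grad u)"
proof -
  obtain Df where D: "\<And>x. (u has_derivative (\<lambda>h. Df x \<bullet> h)) (at x)"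
    and S: "\<And>e. e \<in> Basis \<Longrightarrow> smooth2 (\<lambda>x. Df x \<bullet> e)" using smooth2_D[OF assms] by blast
  have g: "grad u = Df" using grad_eqI[OF D] by auto
  have c: "continuous_on UNIV (\<lambda>x. Df x \<bullet> e)" if "e \<in> Basis" for e
    using smooth2_cont[OF S[OF that]] .
  have "continuous_on UNIV (\<lambda>x. \<Sum>e\<in>Basis. (Df x \<bullet> e) *\<^sub>R e)"
    by (intro continuous_intros c)
  then show ?thesis unfolding g euclidean_representation .
qed

lemma Fub1:
  fixes f :: "pt \<Rightarrow> ennreal"
  assumes "f \<in> borel_measurable borel"
  shows "(\<integral>\<^sup>+x. \<integral>\<^sup>+y. f (x,y) \<partial>lborel \<partial>lborel) = (\<integral>\<^sup>+z. f z \<partial>lborel)"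
proof -
  have m: "f \<in> borel_measurable (lborel \<Otimes>\<^sub>M lborel)"
    using assms by (simp add: lborel_prod)
  show ?thesis using lborel.nn_integral_fst[OF m] by (simp add: lborel_prod)
qed

lemma Fub2:
  fixes f :: "pt \<Rightarrow> ennreal"
  assumes "f \<in> borel_measurable borel"
  shows "(\<integral>\<^sup>+y. \<integral>\<^sup>+x. f (x,y) \<partial>lborel \<partial>lborel) = (\<integral>\<^sup>+z. f z \<partial>lborel)"
proof -
  have m: "f \<in> borel_measurable (lborel \<Otimes>\<^sub>M lborel)"
    using assms by (simp add: lborel_prod)
  have ps: "pair_sigma_finite lborel lborel"
    by (simp add: lborel.sigma_finite_measure_axioms pair_sigma_finite.intro)
  show ?thesis using pair_sigma_finite.nn_integral_snd[OF ps m] by (simp add: lborel_prod)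
qed

lemma Fub1_meas:
  fixes f :: "pt \<Rightarrow> ennreal"
  assumes "f \<in> borel_measurable borel"
  shows "(\<lambda>x. \<integral>\<^sup>+y. f (x,y) \<partial>lborel) \<in> borel_measurable borel"
proof -
  have m: "f \<in> borel_measurable (lborel \<Otimes>\<^sub>M lborel)"
    using assms by (simp add: lborel_prod)
  have "(\<lambda>x. \<integral>\<^sup>+y. f (x,y) \<partial>lborel) \<in> borel_measurable lborel"
    using lborel.borel_measurable_nn_integral_fst[OF m] by simp
  then show ?thesis by simp
qed

lemma Fub2_meas:
  fixes f :: "pt \<Rightarrow> ennreal"
  assumes "f \<in> borel_measurable borel"
  shows "(\<lambda>y. \<integral>\<^sup>+x. f (x,y) \<partial>lborel) \<in> borel_measurable borel"
proof -
  have sw: "(\<lambda>z::pt. (snd z, fst z)) \<in> borel_measurable borel"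
    by (intro borel_measurable_continuous_onI continuous_intros)
  have "(\<lambda>z. f (snd z, fst z)) \<in> borel_measurable borel"
    using measurable_compose[OF sw assms] by (simp add: o_def)
  from Fub1_meas[OF this] show ?thesis by simp
qed

lemma CS_interval:
  fixes \<phi> :: "real \<Rightarrow> real"
  assumes ab: "a \<le> b" and c: "continuous_on {a..b} \<phi>"
  shows "(integral {a..b} \<phi>)\<^sup>2 \<le> (b - a) * integral {a..b} (\<lambda>s. (\<phi> s)\<^sup>2)"
proof (cases "a = b")
  case True then show ?thesis by simp
next
  case False
  with ab have ba: "b - a > 0" by simp
  define A where "A = integral {a..b} \<phi>"
  define B where "B = integral {a..b} (\<lambda>s. (\<phi> s)\<^sup>2)"
  define k where "k = A / (b - a)"
  have i1: "\<phi> integrable_on {a..b}" using c integrable_continuous_interval by blast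
  have i2: "(\<lambda>s. (\<phi> s)\<^sup>2) integrable_on {a..b}"
    by (intro integrable_continuous_interval continuous_intros c)
  have i3: "(\<lambda>s. 2 * k * \<phi> s) integrable_on {a..b}"
    by (intro integrable_continuous_interval continuous_intros c)
  have "0 \<le> integral {a..b} (\<lambda>s. (\<phi> s - k)\<^sup>2)"
    by (intro integral_nonneg integrable_continuous_interval continuous_intros c) auto
  also have "integral {a..b} (\<lambda>s. (\<phi> s - k)\<^sup>2) =
      integral {a..b} (\<lambda>s. (\<phi> s)\<^sup>2 - 2 * k * \<phi> s + k\<^sup>2)"
    by (rule integral_cong) (simp add: power2_diff algebra_simps)
  also have "\<dots> = B - 2 * k * A + k\<^sup>2 * (b - a)"
  proof -
    have "integral {a..b} (\<lambda>s. (\<phi> s)\<^sup>2 - 2 * k * \<phi> s + k\<^sup>2) =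
        integral {a..b} (\<lambda>s. (\<phi> s)\<^sup>2 - 2 * k * \<phi> s) + integral {a..b} (\<lambda>s. k\<^sup>2)"
      by (rule integral_add) (auto intro: integrable_diff i2 i3)
    also have "integral {a..b} (\<lambda>s. (\<phi> s)\<^sup>2 - 2 * k * \<phi> s) =
        B - integral {a..b} (\<lambda>s. 2 * k * \<phi> s)"
      unfolding B_def by (rule integral_diff[OF i2 i3])
    also have "integral {a..b} (\<lambda>s. 2 * k * \<phi> s) = 2 * k * A"
      unfolding A_def by (rule integral_mult_right)
    also have "integral {a..b} (\<lambda>s. k\<^sup>2) = k\<^sup>2 * (b - a)" using ab by simp
    finally show ?thesis .
  qed
  finally have "0 \<le> B - 2 * k * A + k\<^sup>2 * (b - a)" .
  moreover have kb: "k * (b - a) = A" using ba by (simp add: k_def)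
  moreover have "k\<^sup>2 * (b - a) = k * A"
    by (metis kb mult.assoc power2_eq_square)
  ultimately have "0 \<le> B - k * A" by linarith
  then have "(b - a) * (k * A) \<le> (b - a) * B" using ba by (simp add: mult_left_mono)
  moreover have "(b - a) * (k * A) = A\<^sup>2" using kb by (simp add: power2_eq_square algebra_simps)
  ultimately show ?thesis by (simp add: A_def B_def)
qed

lemma segment_ineq:
  fixes u :: "pt \<Rightarrow> real" and G :: "pt \<Rightarrow> pt"
  assumes der: "\<And>z. (u has_derivative (\<lambda>h. G z \<bullet> h)) (at z)"
    and cG: "continuous_on UNIV G" and ab: "a \<le> b"
  shows "ennreal ((u (P + b *\<^sub>R d) - u (P + a *\<^sub>R d))\<^sup>2) \<le>
    ennreal (b - a) * (\<integral>\<^sup>+ s. ennreal ((G (P + s *\<^sub>R d) \<bullet> d)\<^sup>2) * indicator {a<..<b} s \<partial>lborel)"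
proof -
  define \<phi> where "\<phi> s = G (P + s *\<^sub>R d) \<bullet> d" for s
  have cphi: "continuous_on UNIV \<phi>" unfolding \<phi>_def
    by (intro continuous_intros continuous_on_compose2[OF cG]) auto
  have dF: "((\<lambda>s. u (P + s *\<^sub>R d)) has_real_derivative \<phi> s) (at s)" for s
  proof -
    have l: "((\<lambda>s. P + s *\<^sub>R d) has_derivative (\<lambda>h. h *\<^sub>R d)) (at s)"
      by (auto intro!: derivative_eq_intros)
    have "((\<lambda>s. u (P + s *\<^sub>R d)) has_derivative (\<lambda>h. G (P + s *\<^sub>R d) \<bullet> (h *\<^sub>R d))) (at s)"
      using has_derivative_compose[OF l der] by (simp add: o_def)
    moreover have e: "(\<lambda>h. G (P + s *\<^sub>R d) \<bullet> (h *\<^sub>R d)) = (*) (G (P + s *\<^sub>R d) \<bullet> d)"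
      by (auto simp: mult.commute)
    ultimately show ?thesis unfolding has_field_derivative_def \<phi>_def
      by simp
  qed
  have ftc: "(\<phi> has_integral (u (P + b *\<^sub>R d) - u (P + a *\<^sub>R d))) {a..b}"
    by (rule fundamental_theorem_of_calculus[OF ab])
       (auto simp: has_real_derivative_iff_has_vector_derivative[symmetric]
             intro: has_field_derivative_at_within dF)
  have cs: "(u (P + b *\<^sub>R d) - u (P + a *\<^sub>R d))\<^sup>2 \<le> (b - a) * integral {a..b} (\<lambda>s. (\<phi> s)\<^sup>2)"
    using CS_interval[OF ab continuous_on_subset[OF cphi]] ftc by (simp add: integral_unique)
  have hi: "((\<lambda>s. (\<phi> s)\<^sup>2) has_integral integral {a..b} (\<lambda>s. (\<phi> s)\<^sup>2)) {a<..<b}"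
    unfolding has_integral_Icc_iff_Ioo[symmetric]
    by (intro integrable_integral integrable_continuous_interval continuous_intros
          continuous_on_subset[OF cphi]) auto
  have nn: "(\<integral>\<^sup>+ s. ennreal ((\<phi> s)\<^sup>2) * indicator {a<..<b} s \<partial>lborel) =
      ennreal (integral {a..b} (\<lambda>s. (\<phi> s)\<^sup>2))"
    by (rule nn_integral_has_integral_lebesgue'[OF _ hi]) auto
  have "ennreal ((u (P + b *\<^sub>R d) - u (P + a *\<^sub>R d))\<^sup>2) \<le>
      ennreal ((b - a) * integral {a..b} (\<lambda>s. (\<phi> s)\<^sup>2))"
    using cs by (rule ennreal_leI)
  also have "\<dots> = ennreal (b - a) * ennreal (integral {a..b} (\<lambda>s. (\<phi> s)\<^sup>2))"
    using ab by (simp add: ennreal_mult')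
  finally show ?thesis using nn by (simp add: \<phi>_def)
qed

lemma haus_pre_le:
  assumes "S \<subseteq> (\<Union>i. C i)" "\<And>i. bounded (C i)" "\<And>i. diameter (C i) \<le> \<delta>"
  shows "hausdorff1_pre \<delta> S \<le> (\<Sum>i. ennreal (diameter (C i)))"
  unfolding hausdorff1_pre_def using assms by (intro INF_lower) auto

lemma piece_cover:
  fixes x p h :: real and m :: nat
  assumes "h > 0" "p \<le> x" "x \<le> p + m * h" "m > 0"
  shows "\<exists>i<m. p + real i * h \<le> x \<and> x \<le> p + (real i + 1) * h"
proof (cases "x = p + m * h")
  case True
  then show ?thesis using assms by (intro exI[of _ "m - 1"]) (auto simp: of_nat_diff algebra_simps)
next
  case False
  define i where "i = nat \<lfloor>(x - p) / h\<rfloor>"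
  have q0: "0 \<le> (x - p) / h" using assms by simp
  have q1: "(x - p) / h < m" using assms False by (simp add: field_simps)
  have ii: "real i = of_int \<lfloor>(x - p) / h\<rfloor>" unfolding i_def using q0 by simp
  have "real i \<le> (x - p) / h" "(x - p) / h < real i + 1" unfolding ii by linarith+
  then have a: "i * h \<le> x - p" "x - p < (real i + 1) * h" using assms by (simp_all add: field_simps)
  have "real i < m" using \<open>real i \<le> (x - p) / h\<close> q1 by linarith
  then show ?thesis using a by (intro exI[of _ i]) (auto simp: algebra_simps)
qed

lemma haus_upper:
  fixes \<gamma> :: "real \<Rightarrow> pt"
  assumes lip: "c-lipschitz_on {p..q} \<gamma>" and pq: "p \<le> q"
  shows "hausdorff1 (\<gamma> ` {p..q}) \<le> ennreal (c * (q - p))"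
  unfolding hausdorff1_def
proof (rule SUP_least)
  fix \<delta> :: real assume "\<delta> \<in> {0<..}"
  then have d0: "\<delta> > 0" by simp
  have c0: "c \<ge> 0" using lip lipschitz_on_nonneg by blast
  show "hausdorff1_pre \<delta> (\<gamma> ` {p..q}) \<le> ennreal (c * (q - p))"
  proof (cases "p = q")
    case True
    define C where "C i = (if i = (0::nat) then {\<gamma> p} else {})" for i
    have "hausdorff1_pre \<delta> (\<gamma> ` {p..q}) \<le> (\<Sum>i. ennreal (diameter (C i)))"
      by (rule haus_pre_le) (auto simp: C_def True d0 less_imp_le)
    also have "\<dots> = 0"
    proof -
      have "\<And>i. diameter (C i) = 0" by (auto simp: C_def diameter_def)
      then show ?thesis by simp
    qed
    finally show ?thesis by simp
  next
    case False
    with pq have pq': "p < q" by simp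
    obtain m :: nat where m: "c * (q - p) / \<delta> < m" using reals_Archimedean2 by blast
    have m0: "m > 0" using m c0 pq d0
      by (metis divide_nonneg_pos le_less_trans less_eq_real_def mult_nonneg_nonneg of_nat_0_less_iff diff_ge_0_iff_ge)
    define h where "h = (q - p) / m"
    have h0: "h > 0" using pq' m0 by (simp add: h_def)
    have qh: "q = p + m * h" using m0 by (simp add: h_def)
    have ch: "c * h \<le> \<delta>" using m m0 d0 by (simp add: h_def field_simps)
    define C where "C i = (if i < m then \<gamma> ` {p + real i * h .. p + (real i + 1) * h} else {})" for i
    have sub: "{p + real i * h .. p + (real i + 1) * h} \<subseteq> {p..q}" if "i < m" for i
    proof -
      have "(i + 1) * h \<le> m * h" using that h0 by (intro mult_right_mono) auto
      then show ?thesis using h0 qh by (auto simp: algebra_simps)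
    qed
    have cover: "\<gamma> ` {p..q} \<subseteq> (\<Union>i. C i)"
    proof
      fix z assume "z \<in> \<gamma> ` {p..q}"
      then obtain x where x: "x \<in> {p..q}" "z = \<gamma> x" by auto
      obtain i where "i < m" "p + real i * h \<le> x" "x \<le> p + (real i + 1) * h"
        using piece_cover[OF h0, of p x m] x qh m0 by auto
      then show "z \<in> (\<Union>i. C i)" using x by (auto simp: C_def)
    qed
    have cont: "continuous_on {p..q} \<gamma>" using lip by (rule lipschitz_on_continuous_on)
    have bnd: "bounded (C i)" for i
    proof (cases "i < m")
      case True
      have "continuous_on {p + real i * h .. p + (real i + 1) * h} \<gamma>"
        by (rule continuous_on_subset[OF cont sub[OF True]])
      then have "compact (\<gamma> ` {p + real i * h .. p + (real i + 1) * h})"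
        by (intro compact_continuous_image) auto
      then have "bounded (\<gamma> ` {p + real i * h .. p + (real i + 1) * h})" by (rule compact_imp_bounded)
      then show ?thesis by (simp only: C_def if_P[OF True])
    next
      case False then show ?thesis by (simp add: C_def)
    qed
    have diam: "diameter (C i) \<le> c * h" for i
    proof (cases "i < m")
      case True
      define J where "J = {p + real i * h .. p + (real i + 1) * h}"
      have "diameter (\<gamma> ` J) \<le> c * h"
      proof (rule diameter_le)
        show "\<gamma> ` J \<noteq> {} \<or> 0 \<le> c * h" using c0 h0 by simp
        fix z w assume "z \<in> \<gamma> ` J" "w \<in> \<gamma> ` J"
        then obtain x y where xy: "x \<in> J" "y \<in> J" "z = \<gamma> x" "w = \<gamma> y" by auto
        have b1: "0 \<le> real i * h" using h0 by simp
        have "(real i + 1) * h \<le> real m * h" using True h0 by (intro mult_right_mono) auto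
        then have b2: "(real i + 1) * h \<le> q - p" using qh by simp
        have "x \<in> {p..q}" "y \<in> {p..q}" using xy(1,2) b1 b2 by (auto simp: J_def)
        then have "dist (\<gamma> x) (\<gamma> y) \<le> c * dist x y" by (rule lipschitz_onD[OF lip])
        also have "dist x y \<le> h" using xy(1,2) by (auto simp: J_def dist_real_def algebra_simps)
        then have "c * dist x y \<le> c * h" using c0 by (rule mult_left_mono)
        finally show "norm (z - w) \<le> c * h" using xy by (simp add: dist_norm)
      qed
      then show ?thesis by (simp only: C_def J_def if_P[OF True])
    next
      case False then show ?thesis using c0 h0 by (simp add: C_def)
    qed
    have "hausdorff1_pre \<delta> (\<gamma> ` {p..q}) \<le> (\<Sum>i. ennreal (diameter (C i)))"
      by (rule haus_pre_le[OF cover bnd]) (use diam ch in \<open>auto intro: order_trans\<close>)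
    also have "\<dots> = (\<Sum>i<m. ennreal (diameter (C i)))"
      by (rule suminf_finite) (auto simp: C_def)
    also have "\<dots> \<le> (\<Sum>i<m. ennreal (c * h))"
      by (intro sum_mono ennreal_leI diam)
    also have "\<dots> = ennreal (real m * (c * h))"
      by (simp add: ennreal_of_nat_eq_real_of_nat ennreal_mult')
    also have "real m * (c * h) = c * (q - p)" using m0 by (simp add: h_def)
    finally show ?thesis .
  qed
qed

lemma haus_lower:
  fixes pr :: "pt \<Rightarrow> real"
  assumes P: "P \<in> sets lborel" and PS: "P \<subseteq> pr ` S"
    and pr: "\<And>z w. \<bar>pr z - pr w\<bar> \<le> dist z w"
  shows "emeasure lborel P \<le> hausdorff1 S"
proof -
  have "emeasure lborel P \<le> hausdorff1_pre 1 S"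
    unfolding hausdorff1_pre_def
  proof (rule INF_greatest, clarify)
    fix C :: "nat \<Rightarrow> pt set" assume cov: "S \<subseteq> (\<Union>i. C i)" and bd: "\<forall>i. bounded (C i) \<and> diameter (C i) \<le> 1"
    define I where "I i = (if C i = {} then {} else {Inf (pr ` C i) .. Sup (pr ` C i)})" for i
    have key: "pr ` C i \<subseteq> I i \<and> emeasure lborel (I i) \<le> ennreal (diameter (C i))" for i
    proof (cases "C i = {}")
      case True then show ?thesis by (simp add: I_def)
    next
      case False
      have bC: "bounded (C i)" using bd by auto
      have d: "\<bar>pr z - pr w\<bar> \<le> diameter (C i)" if "z \<in> C i" "w \<in> C i" for z w
        using pr[of z w] diameter_bounded_bound[OF bC that] by linarith
      obtain w0 where w0: "w0 \<in> C i" using False by auto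
      have bdd1: "bdd_above (pr ` C i)"
      proof (rule bdd_aboveI[of _ "pr w0 + diameter (C i)"])
        fix y assume "y \<in> pr ` C i"
        then obtain z where z: "z \<in> C i" "y = pr z" by auto
        from d[OF z(1) w0] z(2) show "y \<le> pr w0 + diameter (C i)" by (simp add: abs_le_iff)
      qed
      have bdd2: "bdd_below (pr ` C i)"
      proof (rule bdd_belowI[of _ "pr w0 - diameter (C i)"])
        fix y assume "y \<in> pr ` C i"
        then obtain z where z: "z \<in> C i" "y = pr z" by auto
        from d[OF z(1) w0] z(2) show "pr w0 - diameter (C i) \<le> y" by (simp add: abs_le_iff)
      qed
      have ne: "pr ` C i \<noteq> {}" using False by auto
      have sub: "pr ` C i \<subseteq> I i"
      proof
        fix y assume y: "y \<in> pr ` C i"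
        have "Inf (pr ` C i) \<le> y" by (rule cInf_lower[OF y bdd2])
        moreover have "y \<le> Sup (pr ` C i)" by (rule cSup_upper[OF y bdd1])
        moreover have "I i = {Inf (pr ` C i) .. Sup (pr ` C i)}" by (simp only: I_def if_not_P[OF False])
        ultimately show "y \<in> I i" by simp
      qed
      have le: "Inf (pr ` C i) \<le> Sup (pr ` C i)" using ne bdd1 bdd2
        by (meson cInf_le_cSup)
      have "Sup (pr ` C i) \<le> Inf (pr ` C i) + diameter (C i)"
      proof -
        have "Sup (pr ` C i) - diameter (C i) \<le> Inf (pr ` C i)"
        proof (rule cInf_greatest[OF ne])
          fix y assume "y \<in> pr ` C i"
          then obtain w where w: "w \<in> C i" "y = pr w" by auto
          have "Sup (pr ` C i) \<le> pr w + diameter (C i)"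
          proof (rule cSup_least[OF ne])
            fix y' assume "y' \<in> pr ` C i"
            then obtain z where z: "z \<in> C i" "y' = pr z" by auto
            from d[OF z(1) w(1)] z(2) show "y' \<le> pr w + diameter (C i)" by (simp add: abs_le_iff)
          qed
          then show "Sup (pr ` C i) - diameter (C i) \<le> y" using w by simp
        qed
        then show ?thesis by simp
      qed
      have Ieq: "I i = {Inf (pr ` C i) .. Sup (pr ` C i)}" by (simp only: I_def if_not_P[OF False])
      have "emeasure lborel (I i) = ennreal (Sup (pr ` C i) - Inf (pr ` C i))"
        unfolding Ieq by (rule emeasure_lborel_Icc[OF le])
      also have "\<dots> \<le> ennreal (diameter (C i))"
        by (rule ennreal_leI) (use \<open>Sup (pr ` C i) \<le> Inf (pr ` C i) + diameter (C i)\<close> in linarith)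
      finally have "emeasure lborel (I i) \<le> ennreal (diameter (C i))" .
      then show ?thesis using sub by simp
    qed
    have Isets: "I i \<in> sets lborel" for i
    proof (cases "C i = {}")
      case True
      have "I i = {}" unfolding I_def using True by simp
      then show ?thesis by simp
    next
      case False
      have "I i = {Inf (pr ` C i) .. Sup (pr ` C i)}" unfolding I_def using False by simp
      then show ?thesis by simp
    qed
    have "P \<subseteq> (\<Union>i. I i)"
    proof
      fix x assume "x \<in> P"
      then obtain z where z: "z \<in> S" "x = pr z" using PS by auto
      then obtain i where "z \<in> C i" using cov by auto
      then have "x \<in> I i" using key[of i] z by auto
      then show "x \<in> (\<Union>i. I i)" by auto
    qed
    then have "emeasure lborel P \<le> emeasure lborel (\<Union>i. I i)"
      by (rule emeasure_mono) (use Isets in auto)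
    also have "\<dots> \<le> (\<Sum>i. emeasure lborel (I i))"
      by (rule emeasure_subadditive_countably) (use Isets in auto)
    also have "\<dots> \<le> (\<Sum>i. ennreal (diameter (C i)))"
      by (rule suminf_le[OF _ summableI summableI]) (use key in auto)
    finally show "emeasure lborel P \<le> (\<Sum>i. ennreal (diameter (C i)))" .
  qed
  also have "\<dots> \<le> hausdorff1 S" unfolding hausdorff1_def by (rule SUP_upper) simp
  finally show ?thesis .
qed

lemma sets_H1: "sets H1 = sets borel"
  unfolding H1_def by (metis sets.sigma_sets_eq sets_measure_of sets.space_closed space_borel)

lemma meas_H1: "f \<in> borel_measurable borel \<Longrightarrow> f \<in> borel_measurable H1"
  using measurable_cong_sets[OF sets_H1 refl] by blast

lemma part_setup:
  fixes F :: "real \<Rightarrow> real"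
  assumes ab: "\<alpha> < \<beta>" and cF: "continuous_on {\<alpha>..\<beta>} F" and e: "\<eta> > 0"
  obtains N :: nat where "N > 0"
    "\<And>k x. k < N \<Longrightarrow> x \<in> {\<alpha> + real k * ((\<beta> - \<alpha>) / N) .. \<alpha> + (real k + 1) * ((\<beta> - \<alpha>) / N)} \<Longrightarrow>
       \<bar>F x - F (\<alpha> + real k * ((\<beta> - \<alpha>) / N))\<bar> \<le> \<eta>"
    "\<And>k. k < N \<Longrightarrow> {\<alpha> + real k * ((\<beta> - \<alpha>) / N) .. \<alpha> + (real k + 1) * ((\<beta> - \<alpha>) / N)} \<subseteq> {\<alpha>..\<beta>}"
proof -
  have "uniformly_continuous_on {\<alpha>..\<beta>} F"
    by (rule compact_uniformly_continuous[OF cF compact_Icc])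
  then obtain d where d: "d > 0" "\<And>x x'. x \<in> {\<alpha>..\<beta>} \<Longrightarrow> x' \<in> {\<alpha>..\<beta>} \<Longrightarrow> dist x' x < d \<Longrightarrow> dist (F x') (F x) < \<eta>"
    unfolding uniformly_continuous_on_def using e by metis
  obtain N :: nat where N: "(\<beta> - \<alpha>) / d < N" using reals_Archimedean2 by blast
  have N0: "N > 0" using N ab d
    by (metis divide_pos_pos diff_gt_0_iff_gt less_trans of_nat_0_less_iff)
  define h where "h = (\<beta> - \<alpha>) / N"
  have h0: "h > 0" using ab N0 by (simp add: h_def)
  have hd: "h < d" using N N0 d by (simp add: h_def field_simps)
  have sub: "{\<alpha> + real k * h .. \<alpha> + (real k + 1) * h} \<subseteq> {\<alpha>..\<beta>}" if "k < N" for k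
  proof -
    have "(real k + 1) * h \<le> N * h" using that h0 by (intro mult_right_mono) auto
    also have "N * h = \<beta> - \<alpha>" using N0 by (simp add: h_def)
    finally show ?thesis using h0 by (auto simp: algebra_simps)
  qed
  show ?thesis
  proof (rule that[OF N0, folded h_def])
    fix k x assume k: "k < N" and x: "x \<in> {\<alpha> + real k * h .. \<alpha> + (real k + 1) * h}"
    have kh0: "0 \<le> real k * h" using h0 by simp
    have x1: "\<alpha> + real k * h \<le> x" "x \<le> \<alpha> + (real k + 1) * h" using x by auto
    have "\<alpha> + (real k + 1) * h \<in> {\<alpha>..\<beta>}" using sub[OF k] x1 by auto
    then have "\<alpha> + (real k + 1) * h \<le> \<beta>" by simp
    then have "x \<in> {\<alpha>..\<beta>}" "\<alpha> + real k * h \<in> {\<alpha>..\<beta>}" using x1 kh0 h0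
      unfolding atLeastAtMost_iff by linarith+
    moreover have "dist x (\<alpha> + real k * h) < d" using x hd by (auto simp: dist_real_def algebra_simps)
    ultimately have "dist (F x) (F (\<alpha> + real k * h)) < \<eta>" using d(2) by blast
    then show "\<bar>F x - F (\<alpha> + real k * h)\<bar> \<le> \<eta>" by (simp add: dist_real_def)
  next
    fix k assume "k < N" then show "{\<alpha> + real k * h .. \<alpha> + (real k + 1) * h} \<subseteq> {\<alpha>..\<beta>}" by (rule sub)
  qed
qed

lemma ennreal_piece_ineq:
  fixes F \<eta> c h :: real
  assumes "\<eta> \<ge> 0" "c \<ge> 0" "h \<ge> 0"
  shows "ennreal (F + \<eta>) * ennreal (c * h) \<le> ennreal c * (ennreal (F - \<eta>) * ennreal h) + ennreal (2 * c * \<eta> * h)"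
proof -
  have l: "ennreal (F + \<eta>) * ennreal (c * h) = ennreal ((F + \<eta>) * (c * h))"
    using assms by (intro ennreal_mult''[symmetric]) simp
  have r: "ennreal c * (ennreal (F - \<eta>) * ennreal h) = ennreal (c * ((F - \<eta>) * h))"
    using assms by (simp only: ennreal_mult''[symmetric] ennreal_mult'[symmetric])
  show ?thesis
  proof (cases "F - \<eta> \<ge> 0")
    case True
    have "ennreal ((F + \<eta>) * (c * h)) = ennreal (c * ((F - \<eta>) * h) + 2 * c * \<eta> * h)"
      by (simp add: algebra_simps)
    also have "\<dots> = ennreal (c * ((F - \<eta>) * h)) + ennreal (2 * c * \<eta> * h)"
      using True assms by (intro ennreal_plus) auto
    finally show ?thesis using l r by simp
  next
    case False
    have "(F + \<eta>) * (c * h) \<le> 2 * c * \<eta> * h"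
    proof -
      have "(F + \<eta>) * (c * h) \<le> (2 * \<eta>) * (c * h)"
        using False assms by (intro mult_right_mono) auto
      then show ?thesis by (simp add: algebra_simps)
    qed
    then have "ennreal ((F + \<eta>) * (c * h)) \<le> ennreal (2 * c * \<eta> * h)" by (rule ennreal_leI)
    also have "\<dots> \<le> ennreal (c * ((F - \<eta>) * h)) + ennreal (2 * c * \<eta> * h)" by simp
    finally show ?thesis using l r by simp
  qed
qed

lemma disj_sum_le:
  fixes c :: "nat \<Rightarrow> ennreal" and v :: "'a \<Rightarrow> ennreal"
  assumes disj: "\<And>j k. j < N \<Longrightarrow> k < N \<Longrightarrow> j \<noteq> k \<Longrightarrow> z \<in> A j \<Longrightarrow> z \<notin> A k"
    and le: "\<And>k. k < N \<Longrightarrow> z \<in> A k \<Longrightarrow> z \<in> B \<and> c k \<le> v z"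
  shows "(\<Sum>k<N. c k * indicator (A k) z) \<le> v z * indicator B z"
proof (cases "\<exists>j<N. z \<in> A j")
  case True
  then obtain j where j: "j < N" "z \<in> A j" by auto
  have "(\<Sum>k<N. c k * indicator (A k) z) = c j * indicator (A j) z + (\<Sum>k\<in>{..<N} - {j}. c k * indicator (A k) z)"
    using j by (subst sum.remove[of "{..<N}" j]) auto
  also have "(\<Sum>k\<in>{..<N} - {j}. c k * indicator (A k) z) = 0"
    using disj[OF j(1) _ _ j(2)] by (intro sum.neutral) auto
  finally show ?thesis using le[OF j] j by (simp add: indicator_def)
next
  case False
  then have "(\<Sum>k<N. c k * indicator (A k) z) = 0" by (intro sum.neutral) auto
  then show ?thesis by simp
qed

lemma cov_sum_le:
  fixes c :: "nat \<Rightarrow> ennreal" and v :: "'a \<Rightarrow> ennreal"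
  assumes "z \<in> B \<Longrightarrow> \<exists>k<N. z \<in> A k \<and> v z \<le> c k"
  shows "v z * indicator B z \<le> (\<Sum>k<N. c k * indicator (A k) z)"
proof (cases "z \<in> B")
  case True
  then obtain k where k: "k < N" "z \<in> A k" "v z \<le> c k" using assms by auto
  have "v z * indicator B z \<le> c k * indicator (A k) z" using k True by simp
  also have "\<dots> \<le> (\<Sum>k<N. c k * indicator (A k) z)"
    by (rule member_le_sum) (use k in auto)
  finally show ?thesis .
qed simp

lemma int_sum_ind:
  fixes c :: "nat \<Rightarrow> ennreal"
  assumes "\<And>k. k < N \<Longrightarrow> A k \<in> sets M"
  shows "(\<integral>\<^sup>+z. (\<Sum>k<N. c k * indicator (A k) z) \<partial>M) = (\<Sum>k<N. c k * emeasure M (A k))"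
proof -
  have "(\<integral>\<^sup>+z. (\<Sum>k<N. c k * indicator (A k) z) \<partial>M) = (\<Sum>k<N. \<integral>\<^sup>+z. c k * indicator (A k) z \<partial>M)"
    by (rule nn_integral_sum) (use assms in auto)
  also have "\<dots> = (\<Sum>k<N. c k * emeasure M (A k))"
    by (intro sum.cong refl nn_integral_cmult_indicator) (use assms in auto)
  finally show ?thesis .
qed

lemma pieces_disj:
  fixes h \<alpha> :: real
  assumes "h > 0" "j \<noteq> k" "z \<in> {\<alpha> + real j * h <..< \<alpha> + real j * h + h}"
  shows "z \<notin> {\<alpha> + real k * h <..< \<alpha> + real k * h + h}"
proof
  assume z: "z \<in> {\<alpha> + real k * h <..< \<alpha> + real k * h + h}"
  show False
  proof (cases "j < k")
    case True
    then have "real j + 1 \<le> real k" by simp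
    then have "(real j + 1) * h \<le> real k * h" using assms by (intro mult_right_mono) auto
    then show False using z assms(3) by (auto simp: algebra_simps)
  next
    case False
    then have "real k + 1 \<le> real j" using assms by simp
    then have "(real k + 1) * h \<le> real j * h" using assms by (intro mult_right_mono) auto
    then show False using z assms(3) by (auto simp: algebra_simps)
  qed
qed

lemma pieces_in:
  fixes h \<alpha> \<beta> :: real
  assumes "h > 0" "k < N" "\<alpha> + real N * h = \<beta>"
  shows "\<alpha> \<le> \<alpha> + real k * h" "\<alpha> + real k * h + h \<le> \<beta>"
proof -
  show "\<alpha> \<le> \<alpha> + real k * h" using assms by simp
  have "(real k + 1) * h \<le> real N * h" using assms by (intro mult_right_mono) auto
  then show "\<alpha> + real k * h + h \<le> \<beta>" using assms by (simp add: algebra_simps)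
qed

lemma int_upper:
  fixes \<gamma> :: "real \<Rightarrow> pt" and f :: "pt \<Rightarrow> real"
  assumes H: "\<And>X. X \<in> sets borel \<Longrightarrow> emeasure H1 X = hausdorff1 X"
    and lip: "c-lipschitz_on {\<alpha>..\<beta>} \<gamma>" and ab: "\<alpha> < \<beta>"
    and cg: "continuous_on UNIV \<gamma>" and cf: "continuous_on UNIV f"
  shows "(\<integral>\<^sup>+z. ennreal (f z) * indicator (\<gamma> ` {\<alpha>..\<beta>}) z \<partial>H1)
     \<le> ennreal c * (\<integral>\<^sup>+x. ennreal (f (\<gamma> x)) * indicator {\<alpha>..\<beta>} x \<partial>lborel)"
proof (rule ennreal_le_epsilon)
  fix e :: real assume e: "0 < e"
  have c0: "c \<ge> 0" using lip lipschitz_on_nonneg by blast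
  define \<eta> where "\<eta> = e / (2 * (c + 1) * (\<beta> - \<alpha>))"
  have \<eta>0: "\<eta> > 0" using e ab c0 by (simp add: \<eta>_def)
  have err: "2 * c * \<eta> * (\<beta> - \<alpha>) \<le> e"
  proof -
    have "2 * c * (\<eta> * (\<beta> - \<alpha>)) \<le> 2 * (c + 1) * (\<eta> * (\<beta> - \<alpha>))"
      using \<eta>0 ab by (intro mult_right_mono) auto
    also have "2 * (c + 1) * (\<eta> * (\<beta> - \<alpha>)) = e" using ab c0 by (simp add: \<eta>_def)
    finally show ?thesis by (simp add: mult.assoc)
  qed
  define F where "F = (\<lambda>x. f (\<gamma> x))"
  have cF: "continuous_on UNIV F" unfolding F_def by (rule continuous_on_compose2[OF cf cg]) auto
  have cF': "continuous_on {\<alpha>..\<beta>} F" using cF by (rule continuous_on_subset) simp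
  obtain N :: nat where N0: "N > 0"
    and close0: "\<And>k x. k < N \<Longrightarrow> x \<in> {\<alpha> + real k * ((\<beta> - \<alpha>) / N) .. \<alpha> + (real k + 1) * ((\<beta> - \<alpha>) / N)} \<Longrightarrow>
       \<bar>F x - F (\<alpha> + real k * ((\<beta> - \<alpha>) / N))\<bar> \<le> \<eta>"
    and sub0: "\<And>k. k < N \<Longrightarrow> {\<alpha> + real k * ((\<beta> - \<alpha>) / N) .. \<alpha> + (real k + 1) * ((\<beta> - \<alpha>) / N)} \<subseteq> {\<alpha>..\<beta>}"
    using part_setup[OF ab cF' \<eta>0] by blast
  define h where "h = (\<beta> - \<alpha>) / N"
  define s where "s k = \<alpha> + real k * h" for k
  have h0: "h > 0" using ab N0 by (simp add: h_def)
  have Nh: "\<alpha> + real N * h = \<beta>" using N0 by (simp add: h_def)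
  have close: "\<bar>F x - F (s k)\<bar> \<le> \<eta>" if "k < N" "s k \<le> x" "x \<le> s k + h" for k x
    using close0[of k x] that by (simp add: s_def h_def[symmetric] algebra_simps)
  have sin: "\<alpha> \<le> s k" "s k + h \<le> \<beta>" if "k < N" for k
    using pieces_in[OF h0 that Nh] by (simp_all add: s_def)
  define K where "K k = \<gamma> ` {s k .. s k + h}" for k
  define Pc where "Pc k = {s k <..< s k + h}" for k
  have Kb: "K k \<in> sets borel" for k
  proof -
    have "compact (K k)" unfolding K_def
      by (intro compact_continuous_image continuous_on_subset[OF cg]) auto
    then show ?thesis by (simp add: compact_imp_closed borel_closed)
  qed
  have HK: "emeasure H1 (K k) \<le> ennreal (c * h)" if "k < N" for k
  proof -
    have "emeasure H1 (K k) = hausdorff1 (K k)" using H[OF Kb] .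
    also have "\<dots> \<le> ennreal (c * (s k + h - s k))" unfolding K_def
      by (rule haus_upper[OF lipschitz_on_subset[OF lip]]) (use sin[OF that] h0 in auto)
    finally show ?thesis by simp
  qed
  have step1: "(\<integral>\<^sup>+z. ennreal (f z) * indicator (\<gamma> ` {\<alpha>..\<beta>}) z \<partial>H1)
      \<le> (\<integral>\<^sup>+z. (\<Sum>k<N. ennreal (F (s k) + \<eta>) * indicator (K k) z) \<partial>H1)"
  proof (rule nn_integral_mono, rule cov_sum_le)
    fix z assume "z \<in> \<gamma> ` {\<alpha>..\<beta>}"
    then obtain x where x: "x \<in> {\<alpha>..\<beta>}" "z = \<gamma> x" by auto
    obtain k where k: "k < N" "\<alpha> + real k * h \<le> x" "x \<le> \<alpha> + (real k + 1) * h"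
      using piece_cover[OF h0, of \<alpha> x N] x Nh N0 by auto
    have xk: "s k \<le> x" "x \<le> s k + h" using k by (auto simp: s_def algebra_simps)
    have "f z \<le> F (s k) + \<eta>" using close[OF k(1) xk] x by (simp add: F_def)
    then show "\<exists>k<N. z \<in> K k \<and> ennreal (f z) \<le> ennreal (F (s k) + \<eta>)"
      using k(1) xk x by (intro exI[of _ k]) (auto simp: K_def intro: ennreal_leI)
  qed
  also have "\<dots> = (\<Sum>k<N. ennreal (F (s k) + \<eta>) * emeasure H1 (K k))"
    by (rule int_sum_ind) (simp only: sets_H1 Kb)
  also have "\<dots> \<le> (\<Sum>k<N. ennreal (F (s k) + \<eta>) * ennreal (c * h))"
    by (intro sum_mono mult_left_mono HK) auto
  also have "\<dots> \<le> (\<Sum>k<N. ennreal c * (ennreal (F (s k) - \<eta>) * ennreal h) + ennreal (2 * c * \<eta> * h))"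
    by (intro sum_mono ennreal_piece_ineq) (use \<eta>0 c0 h0 in auto)
  also have "\<dots> = ennreal c * (\<Sum>k<N. ennreal (F (s k) - \<eta>) * ennreal h) + ennreal (2 * c * \<eta> * (\<beta> - \<alpha>))"
  proof -
    have "(\<Sum>k<N. ennreal (2 * c * \<eta> * h)) = ennreal (real N * (2 * c * \<eta> * h))"
      by (simp add: ennreal_of_nat_eq_real_of_nat ennreal_mult')
    also have "real N * (2 * c * \<eta> * h) = 2 * c * \<eta> * (\<beta> - \<alpha>)" using N0 by (simp add: h_def)
    finally show ?thesis by (simp add: sum.distrib sum_distrib_left)
  qed
  also have "(\<Sum>k<N. ennreal (F (s k) - \<eta>) * ennreal h) = (\<Sum>k<N. ennreal (F (s k) - \<eta>) * emeasure lborel (Pc k))"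
    using h0 by (simp add: Pc_def)
  also have "\<dots> = (\<integral>\<^sup>+x. (\<Sum>k<N. ennreal (F (s k) - \<eta>) * indicator (Pc k) x) \<partial>lborel)"
    by (rule int_sum_ind[symmetric]) (auto simp: Pc_def)
  also have "\<dots> \<le> (\<integral>\<^sup>+x. ennreal (f (\<gamma> x)) * indicator {\<alpha>..\<beta>} x \<partial>lborel)"
  proof (rule nn_integral_mono, rule disj_sum_le)
    fix x j k assume jk: "j < N" "k < N" "j \<noteq> k" "x \<in> Pc j"
    have "x \<in> {\<alpha> + real j * h <..< \<alpha> + real j * h + h}" using jk(4) by (simp add: Pc_def s_def)
    from pieces_disj[OF h0 jk(3) this] show "x \<notin> Pc k" by (simp add: Pc_def s_def)
  next
    fix x k assume k: "k < N" and x: "x \<in> Pc k"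
    then have xk: "s k \<le> x" "x \<le> s k + h" by (auto simp: Pc_def)
    have "F (s k) - \<eta> \<le> F x" using close[OF k xk] by simp
    then show "x \<in> {\<alpha>..\<beta>} \<and> ennreal (F (s k) - \<eta>) \<le> ennreal (f (\<gamma> x))"
      using sin[OF k] xk by (auto simp: F_def intro: ennreal_leI)
  qed
  finally have "(\<integral>\<^sup>+z. ennreal (f z) * indicator (\<gamma> ` {\<alpha>..\<beta>}) z \<partial>H1)
     \<le> ennreal c * (\<integral>\<^sup>+x. ennreal (f (\<gamma> x)) * indicator {\<alpha>..\<beta>} x \<partial>lborel) + ennreal (2 * c * \<eta> * (\<beta> - \<alpha>))"
    by (simp add: mult_left_mono add_right_mono)
  also have "\<dots> \<le> ennreal c * (\<integral>\<^sup>+x. ennreal (f (\<gamma> x)) * indicator {\<alpha>..\<beta>} x \<partial>lborel) + ennreal e"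
    by (intro add_left_mono ennreal_leI err)
  finally show "(\<integral>\<^sup>+z. ennreal (f z) * indicator (\<gamma> ` {\<alpha>..\<beta>}) z \<partial>H1)
     \<le> ennreal c * (\<integral>\<^sup>+x. ennreal (f (\<gamma> x)) * indicator {\<alpha>..\<beta>} x \<partial>lborel) + ennreal e" .
qed

lemma int_lower:
  fixes \<gamma> :: "real \<Rightarrow> pt" and f :: "pt \<Rightarrow> real" and pr :: "pt \<Rightarrow> real"
  assumes H: "\<And>X. X \<in> sets borel \<Longrightarrow> emeasure H1 X = hausdorff1 X"
    and ab: "\<alpha> < \<beta>"
    and cg: "continuous_on UNIV \<gamma>" and cf: "continuous_on UNIV f"
    and pr: "\<And>z w. \<bar>pr z - pr w\<bar> \<le> dist z w"
    and inv: "\<And>x. x \<in> {\<alpha>..\<beta>} \<Longrightarrow> pr (\<gamma> x) = x"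
  shows "(\<integral>\<^sup>+x. ennreal (f (\<gamma> x)) * indicator {\<alpha><..<\<beta>} x \<partial>lborel)
     \<le> (\<integral>\<^sup>+z. ennreal (f z) * indicator (\<gamma> ` {\<alpha><..<\<beta>}) z \<partial>H1)"
proof (rule ennreal_le_epsilon)
  fix e :: real assume e: "0 < e"
  define \<eta> where "\<eta> = e / (2 * (\<beta> - \<alpha>))"
  have \<eta>0: "\<eta> > 0" using e ab by (simp add: \<eta>_def)
  have err: "2 * 1 * \<eta> * (\<beta> - \<alpha>) = e" using ab unfolding \<eta>_def by (simp add: field_simps)
  define F where "F = (\<lambda>x. f (\<gamma> x))"
  have cF: "continuous_on UNIV F" unfolding F_def by (rule continuous_on_compose2[OF cf cg]) auto
  have cF': "continuous_on {\<alpha>..\<beta>} F" using cF by (rule continuous_on_subset) simp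
  obtain N :: nat where N0: "N > 0"
    and close0: "\<And>k x. k < N \<Longrightarrow> x \<in> {\<alpha> + real k * ((\<beta> - \<alpha>) / N) .. \<alpha> + (real k + 1) * ((\<beta> - \<alpha>) / N)} \<Longrightarrow>
       \<bar>F x - F (\<alpha> + real k * ((\<beta> - \<alpha>) / N))\<bar> \<le> \<eta>"
    and sub0: "\<And>k. k < N \<Longrightarrow> {\<alpha> + real k * ((\<beta> - \<alpha>) / N) .. \<alpha> + (real k + 1) * ((\<beta> - \<alpha>) / N)} \<subseteq> {\<alpha>..\<beta>}"
    using part_setup[OF ab cF' \<eta>0] by blast
  define h where "h = (\<beta> - \<alpha>) / N"
  define s where "s k = \<alpha> + real k * h" for k
  have h0: "h > 0" using ab N0 by (simp add: h_def)
  have Nh: "\<alpha> + real N * h = \<beta>" using N0 by (simp add: h_def)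
  have close: "\<bar>F x - F (s k)\<bar> \<le> \<eta>" if "k < N" "s k \<le> x" "x \<le> s k + h" for k x
    using close0[of k x] that by (simp add: s_def h_def[symmetric] algebra_simps)
  have sin: "\<alpha> \<le> s k" "s k + h \<le> \<beta>" if "k < N" for k
    using pieces_in[OF h0 that Nh] by (simp_all add: s_def)
  define I where "I k = {s k .. s k + h}" for k
  define Pc where "Pc k = {s k <..< s k + h}" for k
  define K where "K k = \<gamma> ` Pc k" for k
  have Keq: "K k = \<gamma> ` I k - {\<gamma> (s k), \<gamma> (s k + h)}" if k: "k < N" for k
  proof
    show "K k \<subseteq> \<gamma> ` I k - {\<gamma> (s k), \<gamma> (s k + h)}"
    proof
      fix z assume "z \<in> K k"
      then obtain x where x: "x \<in> Pc k" "z = \<gamma> x" by (auto simp: K_def)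
      have xab: "x \<in> {\<alpha>..\<beta>}" using x sin[OF k] by (auto simp: Pc_def)
      have "z \<noteq> \<gamma> (s k)"
      proof
        assume "z = \<gamma> (s k)"
        then have "pr (\<gamma> x) = pr (\<gamma> (s k))" using x by simp
        then have "x = s k" using inv[OF xab] inv[of "s k"] sin[OF k] h0 by auto
        then show False using x by (simp add: Pc_def)
      qed
      moreover have "z \<noteq> \<gamma> (s k + h)"
      proof
        assume "z = \<gamma> (s k + h)"
        then have "pr (\<gamma> x) = pr (\<gamma> (s k + h))" using x by simp
        then have "x = s k + h" using inv[OF xab] inv[of "s k + h"] sin[OF k] h0 by auto
        then show False using x by (simp add: Pc_def)
      qed
      moreover have "z \<in> \<gamma> ` I k" using x by (auto simp: I_def Pc_def)
      ultimately show "z \<in> \<gamma> ` I k - {\<gamma> (s k), \<gamma> (s k + h)}" by simp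
    qed
  next
    show "\<gamma> ` I k - {\<gamma> (s k), \<gamma> (s k + h)} \<subseteq> K k"
    proof
      fix z assume z: "z \<in> \<gamma> ` I k - {\<gamma> (s k), \<gamma> (s k + h)}"
      then obtain x where x: "x \<in> I k" "z = \<gamma> x" by auto
      have "x \<noteq> s k" "x \<noteq> s k + h" using z x by auto
      then have "x \<in> Pc k" using x by (auto simp: I_def Pc_def)
      then show "z \<in> K k" using x by (auto simp: K_def)
    qed
  qed
  have Kb: "K k \<in> sets borel" if k: "k < N" for k
  proof -
    have "compact (\<gamma> ` I k)" unfolding I_def
      by (intro compact_continuous_image continuous_on_subset[OF cg]) auto
    then have c: "\<gamma> ` I k \<in> sets borel" by (simp add: compact_imp_closed borel_closed)
    have f: "{\<gamma> (s k), \<gamma> (s k + h)} \<in> sets borel" by (intro borel_closed) simp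
    show ?thesis unfolding Keq[OF k] using c f by (rule sets.Diff)
  qed
  have HK: "ennreal h \<le> emeasure H1 (K k)" if k: "k < N" for k
  proof -
    have "ennreal h = emeasure lborel (Pc k)" using h0 by (simp add: Pc_def)
    also have "\<dots> \<le> hausdorff1 (K k)"
    proof (rule haus_lower[OF _ _ pr])
      show "Pc k \<in> sets lborel" by (simp add: Pc_def)
      show "Pc k \<subseteq> pr ` K k"
      proof
        fix x assume x: "x \<in> Pc k"
        then have "x \<in> {\<alpha>..\<beta>}" using sin[OF k] by (auto simp: Pc_def)
        then have "x = pr (\<gamma> x)" using inv by simp
        then show "x \<in> pr ` K k" using x by (auto simp: K_def)
      qed
    qed
    also have "\<dots> = emeasure H1 (K k)" using H[OF Kb[OF k]] by simp
    finally show ?thesis .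
  qed
  have "(\<integral>\<^sup>+x. ennreal (f (\<gamma> x)) * indicator {\<alpha><..<\<beta>} x \<partial>lborel)
      \<le> (\<integral>\<^sup>+x. (\<Sum>k<N. ennreal (F (s k) + \<eta>) * indicator (I k) x) \<partial>lborel)"
  proof (rule nn_integral_mono, rule cov_sum_le)
    fix x assume "x \<in> {\<alpha><..<\<beta>}"
    then have x: "x \<in> {\<alpha>..\<beta>}" by auto
    obtain k where k: "k < N" "\<alpha> + real k * h \<le> x" "x \<le> \<alpha> + (real k + 1) * h"
      using piece_cover[OF h0, of \<alpha> x N] x Nh N0 by auto
    have xk: "s k \<le> x" "x \<le> s k + h" using k by (auto simp: s_def algebra_simps)
    have "F x \<le> F (s k) + \<eta>" using close[OF k(1) xk] by simp
    then show "\<exists>k<N. x \<in> I k \<and> ennreal (f (\<gamma> x)) \<le> ennreal (F (s k) + \<eta>)"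
      using k(1) xk by (intro exI[of _ k]) (auto simp: I_def F_def intro: ennreal_leI)
  qed
  also have "\<dots> = (\<Sum>k<N. ennreal (F (s k) + \<eta>) * emeasure lborel (I k))"
    by (rule int_sum_ind) (simp add: I_def)
  also have "\<dots> = (\<Sum>k<N. ennreal (F (s k) + \<eta>) * ennreal (1 * h))"
    using h0 by (simp add: I_def)
  also have "\<dots> \<le> (\<Sum>k<N. ennreal 1 * (ennreal (F (s k) - \<eta>) * ennreal h) + ennreal (2 * 1 * \<eta> * h))"
    by (intro sum_mono ennreal_piece_ineq) (use \<eta>0 h0 in auto)
  also have "\<dots> = (\<Sum>k<N. ennreal (F (s k) - \<eta>) * ennreal h) + ennreal (2 * 1 * \<eta> * (\<beta> - \<alpha>))"
  proof -
    have "(\<Sum>k<N. ennreal (2 * 1 * \<eta> * h)) = ennreal (real N * (2 * 1 * \<eta> * h))"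
      by (simp add: ennreal_of_nat_eq_real_of_nat ennreal_mult')
    also have "real N * (2 * 1 * \<eta> * h) = 2 * 1 * \<eta> * (\<beta> - \<alpha>)" using N0 by (simp add: h_def)
    finally show ?thesis by (simp add: sum.distrib)
  qed
  also have "(\<Sum>k<N. ennreal (F (s k) - \<eta>) * ennreal h) \<le> (\<Sum>k<N. ennreal (F (s k) - \<eta>) * emeasure H1 (K k))"
    by (intro sum_mono mult_left_mono HK) auto
  also have "\<dots> = (\<integral>\<^sup>+z. (\<Sum>k<N. ennreal (F (s k) - \<eta>) * indicator (K k) z) \<partial>H1)"
    by (rule int_sum_ind[symmetric]) (simp only: sets_H1 Kb)
  also have "\<dots> \<le> (\<integral>\<^sup>+z. ennreal (f z) * indicator (\<gamma> ` {\<alpha><..<\<beta>}) z \<partial>H1)"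
  proof (rule nn_integral_mono, rule disj_sum_le)
    fix z j k assume jk: "j < N" "k < N" "j \<noteq> k" and zj: "z \<in> K j"
    show "z \<notin> K k"
    proof
      assume zk: "z \<in> K k"
      obtain x where x: "x \<in> Pc j" "z = \<gamma> x" using zj by (auto simp: K_def)
      obtain y where y: "y \<in> Pc k" "z = \<gamma> y" using zk by (auto simp: K_def)
      have "x \<in> {\<alpha>..\<beta>}" using x sin[OF jk(1)] by (auto simp: Pc_def)
      moreover have "y \<in> {\<alpha>..\<beta>}" using y sin[OF jk(2)] by (auto simp: Pc_def)
      ultimately have "x = y" using inv x y by metis
      then show False using pieces_disj[OF h0 jk(3), of x \<alpha>] x y by (simp add: Pc_def s_def)
    qed
  next
    fix z k assume k: "k < N" and z: "z \<in> K k"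
    then obtain x where x: "x \<in> Pc k" "z = \<gamma> x" by (auto simp: K_def)
    then have xk: "s k \<le> x" "x \<le> s k + h" by (auto simp: Pc_def)
    have "F (s k) - \<eta> \<le> F x" using close[OF k xk] by simp
    moreover have "x \<in> {\<alpha><..<\<beta>}" using x sin[OF k] by (auto simp: Pc_def)
    ultimately show "z \<in> \<gamma> ` {\<alpha><..<\<beta>} \<and> ennreal (F (s k) - \<eta>) \<le> ennreal (f z)"
      using x by (auto simp: F_def intro: ennreal_leI)
  qed
  finally show "(\<integral>\<^sup>+x. ennreal (f (\<gamma> x)) * indicator {\<alpha><..<\<beta>} x \<partial>lborel)
     \<le> (\<integral>\<^sup>+z. ennreal (f z) * indicator (\<gamma> ` {\<alpha><..<\<beta>}) z \<partial>H1) + ennreal e"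
    using err by (simp add: add_right_mono)
qed

lemma inner_10: "(z::pt) \<bullet> (1,0) = fst z" by (cases z) (simp add: inner_Pair)
lemma inner_01: "(z::pt) \<bullet> (0,1) = snd z" by (cases z) (simp add: inner_Pair)
lemma fst_sq_le: "(fst (z::pt))\<^sup>2 \<le> (norm z)\<^sup>2" by (cases z) (simp add: norm_Pair)
lemma snd_sq_le: "(snd (z::pt))\<^sup>2 \<le> (norm z)\<^sup>2" by (cases z) (simp add: norm_Pair)

lemma seg_h:
  fixes u :: "pt \<Rightarrow> real" and G :: "pt \<Rightarrow> pt"
  assumes der: "\<And>z. (u has_derivative (\<lambda>h. G z \<bullet> h)) (at z)" and cG: "continuous_on UNIV G" and ab: "a \<le> b"
  shows "ennreal ((u (b, y) - u (a, y))\<^sup>2) \<le> ennreal (b - a) * (\<integral>\<^sup>+ s. ennreal ((fst (G (s, y)))\<^sup>2) * indicator {a<..<b} s \<partial>lborel)"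
  using segment_ineq[OF der cG ab, of "(0, y)" "(1, 0)"] by (simp add: inner_10)

lemma seg_v:
  fixes u :: "pt \<Rightarrow> real" and G :: "pt \<Rightarrow> pt"
  assumes der: "\<And>z. (u has_derivative (\<lambda>h. G z \<bullet> h)) (at z)" and cG: "continuous_on UNIV G" and ab: "a \<le> b"
  shows "ennreal ((u (x, b) - u (x, a))\<^sup>2) \<le> ennreal (b - a) * (\<integral>\<^sup>+ r. ennreal ((snd (G (x, r)))\<^sup>2) * indicator {a<..<b} r \<partial>lborel)"
  using segment_ineq[OF der cG ab, of "(x, 0)" "(0, 1)"] by (simp add: inner_01)

lemma cont_ind_meas:
  fixes f :: "'a::euclidean_space \<Rightarrow> real"
  assumes "continuous_on UNIV f" "A \<in> sets borel"
  shows "(\<lambda>x. ennreal (f x) * indicator A x) \<in> borel_measurable borel"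
proof -
  have [measurable]: "f \<in> borel_measurable borel" using assms(1) by (rule borel_measurable_continuous_onI)
  have [measurable]: "A \<in> sets borel" by (rule assms(2))
  show ?thesis by measurable
qed

lemma sq3: "((a::real) + b - c)\<^sup>2 \<le> 3 * a\<^sup>2 + 3 * b\<^sup>2 + 3 * c\<^sup>2"
proof -
  have "0 \<le> (a - b)\<^sup>2 + (a + c)\<^sup>2 + (b + c)\<^sup>2" by simp
  then show ?thesis by (simp add: power2_eq_square algebra_simps)
qed

lemma sq2: "((a::real) - c)\<^sup>2 \<le> 2 * a\<^sup>2 + 2 * c\<^sup>2"
proof -
  have "0 \<le> (a + c)\<^sup>2" by simp
  then show ?thesis by (simp add: power2_eq_square algebra_simps)
qed

lemma ennreal_sq3:
  fixes a b c :: real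
  shows "ennreal ((a + b - c)\<^sup>2) \<le> 3 * ennreal (a\<^sup>2) + 3 * ennreal (b\<^sup>2) + 3 * ennreal (c\<^sup>2)"
proof -
  have "ennreal ((a + b - c)\<^sup>2) \<le> ennreal (3 * a\<^sup>2 + 3 * b\<^sup>2 + 3 * c\<^sup>2)"
    by (rule ennreal_leI[OF sq3])
  also have "\<dots> = 3 * ennreal (a\<^sup>2) + 3 * ennreal (b\<^sup>2) + 3 * ennreal (c\<^sup>2)"
    by (simp add: ennreal_mult)
  finally show ?thesis .
qed

lemma ennreal_sq2:
  fixes a c :: real
  shows "ennreal ((a - c)\<^sup>2) \<le> 2 * ennreal (a\<^sup>2) + 2 * ennreal (c\<^sup>2)"
proof -
  have "ennreal ((a - c)\<^sup>2) \<le> ennreal (2 * a\<^sup>2 + 2 * c\<^sup>2)"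
    by (rule ennreal_leI[OF sq2])
  also have "\<dots> = 2 * ennreal (a\<^sup>2) + 2 * ennreal (c\<^sup>2)"
    by (simp add: ennreal_mult)
  finally show ?thesis .
qed

lemma key_core:
  fixes u :: "pt \<Rightarrow> real" and g :: "real \<Rightarrow> real" and K Hh :: "real \<Rightarrow> ennreal" and D :: ennreal
  assumes e0: "\<epsilon> > 0" and a2: "a2 = a1 + \<epsilon>" and L0: "L \<ge> 0" and b0: "b > 0"
    and gl: "\<And>s x. s \<in> {a1..a2} \<Longrightarrow> x \<in> {a1..a2} \<Longrightarrow> \<bar>g s - g x\<bar> \<le> L * \<epsilon>"
    and R_def: "R = {(x, y). a1 < x \<and> x < a2 \<and> g x < y \<and> y < g x + b}"
    and vb: "\<And>x0 a' y'. a' \<le> y' \<Longrightarrow> (\<And>r. r \<in> {a'<..<y'} \<Longrightarrow> (x0, r) \<in> R) \<Longrightarrow>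
        ennreal ((u (x0, y') - u (x0, a'))\<^sup>2) \<le> ennreal (y' - a') * K x0"
    and hb: "\<And>x0 y. a1 \<le> x0 \<Longrightarrow> (\<And>s. s \<in> {a1<..<x0} \<Longrightarrow> (s, y) \<in> R) \<Longrightarrow>
        ennreal ((u (x0, y) - u (a1, y))\<^sup>2) \<le> ennreal (x0 - a1) * Hh y"
    and DK: "(\<integral>\<^sup>+x. K x \<partial>lborel) = D" and DH: "(\<integral>\<^sup>+y. Hh y \<partial>lborel) = D"
    and Km: "K \<in> borel_measurable borel" and Hm: "Hh \<in> borel_measurable borel"
    and Sdm: "(\<lambda>y. ennreal ((u (a1, y))\<^sup>2) * indicator {g a1<..<g a1 + b} y) \<in> borel_measurable borel"
    and Tpm: "(\<lambda>x. ennreal ((u (x, g x + b))\<^sup>2) * indicator {a1<..<a2} x) \<in> borel_measurable borel"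
    and Ppm: "(\<lambda>x. ennreal ((u (x, g x))\<^sup>2) * indicator {a1<..<a2} x) \<in> borel_measurable borel"
  shows "(\<integral>\<^sup>+x. ennreal ((u (x, g x))\<^sup>2) * indicator {a1<..<a2} x \<partial>lborel)
    \<le> 3 * ((\<integral>\<^sup>+y. ennreal ((u (a1, y))\<^sup>2) * indicator {g a1<..<g a1 + b} y \<partial>lborel)
           + (\<integral>\<^sup>+x. ennreal ((u (x, g x + b))\<^sup>2) * indicator {a1<..<a2} x \<partial>lborel))
      + ennreal (6 * (L + 1) * \<epsilon>) * D"
proof -
  define Sd where "Sd y = ennreal ((u (a1, y))\<^sup>2) * indicator {g a1<..<g a1 + b} y" for y
  define Tp where "Tp x = ennreal ((u (x, g x + b))\<^sup>2) * indicator {a1<..<a2} x" for x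
  define Pp where "Pp x = ennreal ((u (x, g x))\<^sup>2) * indicator {a1<..<a2} x" for x
  define S where "S = (\<integral>\<^sup>+y. Sd y \<partial>lborel)"
  define T where "T = (\<integral>\<^sup>+x. Tp x \<partial>lborel)"
  have Sdm': "Sd \<in> borel_measurable borel" using Sdm by (simp add: Sd_def[abs_def])
  have Tpm': "Tp \<in> borel_measurable borel" using Tpm by (simp add: Tp_def[abs_def])
  have Ppm': "Pp \<in> borel_measurable borel" using Ppm by (simp add: Pp_def[abs_def])
  have goal: "(\<integral>\<^sup>+x. Pp x \<partial>lborel) \<le> 3 * (S + T) + ennreal (6 * (L + 1) * \<epsilon>) * D"
  proof (cases "(2 * L + 1) * \<epsilon> \<le> b")
    case True
    have pt: "ennreal ((u (x0, g x0))\<^sup>2) * ennreal \<epsilon> \<le> 3 * S + 3 * ennreal \<epsilon> * D + 3 * ennreal ((L + 1) * \<epsilon>) * K x0 * ennreal \<epsilon>"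
      if x0: "x0 \<in> {a1<..<a2}" for x0
    proof -
      define c where "c = g x0 + L * \<epsilon>"
      have Le0: "0 \<le> L * \<epsilon>" using L0 e0 by simp
      have yb: "ennreal ((u (x0, g x0))\<^sup>2) * indicator {c<..<c + \<epsilon>} y
          \<le> 3 * Sd y + 3 * ennreal \<epsilon> * Hh y + 3 * ennreal ((L + 1) * \<epsilon>) * K x0 * indicator {c<..<c + \<epsilon>} y" for y
      proof (cases "y \<in> {c<..<c + \<epsilon>}")
        case False then show ?thesis by simp
      next
        case True
        have y1: "g x0 + L * \<epsilon> < y" "y < g x0 + L * \<epsilon> + \<epsilon>" using True by (auto simp: c_def)
        have x0ab: "x0 \<in> {a1..a2}" using x0 by auto
        have inR_h: "(s, y) \<in> R" if s: "s \<in> {a1<..<x0}" for s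
        proof -
          have "\<bar>g s - g x0\<bar> \<le> L * \<epsilon>" using gl[of s x0] s x0 by auto
          moreover have "2 * L * \<epsilon> + \<epsilon> \<le> b" using \<open>(2 * L + 1) * \<epsilon> \<le> b\<close> by (simp add: algebra_simps)
          ultimately show ?thesis using s x0 y1 by (auto simp: R_def abs_le_iff)
        qed
        have inR_v: "(x0, r) \<in> R" if r: "r \<in> {g x0<..<y}" for r
        proof -
          have "(L + 1) * \<epsilon> \<le> (2 * L + 1) * \<epsilon>" using L0 e0 by (intro mult_right_mono) auto
          then have "(L + 1) * \<epsilon> \<le> b" using \<open>(2 * L + 1) * \<epsilon> \<le> b\<close> by linarith
          then have "L * \<epsilon> + \<epsilon> \<le> b" by (simp add: algebra_simps)
          then show ?thesis using r x0 y1 by (auto simp: R_def)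
        qed
        have ySd: "y \<in> {g a1<..<g a1 + b}"
        proof -
          have "\<bar>g a1 - g x0\<bar> \<le> L * \<epsilon>" using gl[of a1 x0] x0 a2 e0 by auto
          moreover have "2 * L * \<epsilon> + \<epsilon> \<le> b" using \<open>(2 * L + 1) * \<epsilon> \<le> b\<close> by (simp add: algebra_simps)
          ultimately show ?thesis using y1 by (auto simp: abs_le_iff)
        qed
        have h1: "ennreal ((u (x0, y) - u (a1, y))\<^sup>2) \<le> ennreal \<epsilon> * Hh y"
        proof -
          have "ennreal ((u (x0, y) - u (a1, y))\<^sup>2) \<le> ennreal (x0 - a1) * Hh y"
            by (rule hb) (use x0 inR_h in auto)
          also have "\<dots> \<le> ennreal \<epsilon> * Hh y" using x0 a2 by (intro mult_right_mono ennreal_leI) auto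
          finally show ?thesis .
        qed
        have v1: "ennreal ((u (x0, y) - u (x0, g x0))\<^sup>2) \<le> ennreal ((L + 1) * \<epsilon>) * K x0"
        proof -
          have "ennreal ((u (x0, y) - u (x0, g x0))\<^sup>2) \<le> ennreal (y - g x0) * K x0"
            by (rule vb[OF _ inR_v]) (use y1 Le0 in linarith)
          also have "\<dots> \<le> ennreal ((L + 1) * \<epsilon>) * K x0" using y1
            by (intro mult_right_mono ennreal_leI) (auto simp: algebra_simps)
          finally show ?thesis .
        qed
        have "ennreal ((u (x0, g x0))\<^sup>2) = ennreal ((u (a1, y) + (u (x0, y) - u (a1, y)) - (u (x0, y) - u (x0, g x0)))\<^sup>2)"
          by simp
        also have "\<dots> \<le> 3 * ennreal ((u (a1, y))\<^sup>2) + 3 * ennreal ((u (x0, y) - u (a1, y))\<^sup>2) + 3 * ennreal ((u (x0, y) - u (x0, g x0))\<^sup>2)"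
          by (rule ennreal_sq3)
        also have "\<dots> \<le> 3 * Sd y + 3 * (ennreal \<epsilon> * Hh y) + 3 * (ennreal ((L + 1) * \<epsilon>) * K x0)"
          using ySd h1 v1 by (intro add_mono mult_left_mono) (auto simp: Sd_def)
        finally show ?thesis using True by (simp add: mult.assoc)
      qed
      have "ennreal ((u (x0, g x0))\<^sup>2) * ennreal \<epsilon> = (\<integral>\<^sup>+y. ennreal ((u (x0, g x0))\<^sup>2) * indicator {c<..<c + \<epsilon>} y \<partial>lborel)"
        using e0 by (simp add: nn_integral_cmult_indicator)
      also have "\<dots> \<le> (\<integral>\<^sup>+y. 3 * Sd y + 3 * ennreal \<epsilon> * Hh y + 3 * ennreal ((L + 1) * \<epsilon>) * K x0 * indicator {c<..<c + \<epsilon>} y \<partial>lborel)"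
        by (rule nn_integral_mono) (rule yb)
      also have "\<dots> = 3 * S + 3 * ennreal \<epsilon> * D + 3 * ennreal ((L + 1) * \<epsilon>) * K x0 * ennreal \<epsilon>"
        using Sdm' Hm e0 by (simp add: nn_integral_add nn_integral_cmult nn_integral_cmult_indicator S_def DH)
      finally show ?thesis .
    qed
    have mc: "(\<integral>\<^sup>+x. Pp x * ennreal \<epsilon> \<partial>lborel) = (\<integral>\<^sup>+x. Pp x \<partial>lborel) * ennreal \<epsilon>"
      by (rule nn_integral_multc) (use Ppm' in simp)
    have "ennreal \<epsilon> * (\<integral>\<^sup>+x. Pp x \<partial>lborel) = (\<integral>\<^sup>+x. Pp x * ennreal \<epsilon> \<partial>lborel)"
      unfolding mc by (rule mult.commute)
    also have "\<dots> \<le> (\<integral>\<^sup>+x. (3 * S + 3 * ennreal \<epsilon> * D) * indicator {a1<..<a2} x + (3 * ennreal ((L + 1) * \<epsilon>) * ennreal \<epsilon>) * K x \<partial>lborel)"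
    proof (rule nn_integral_mono)
      fix x show "Pp x * ennreal \<epsilon> \<le> (3 * S + 3 * ennreal \<epsilon> * D) * indicator {a1<..<a2} x + (3 * ennreal ((L + 1) * \<epsilon>) * ennreal \<epsilon>) * K x"
      proof (cases "x \<in> {a1<..<a2}")
        case True
        then show ?thesis using pt[OF True] by (simp add: Pp_def mult.assoc mult.commute mult.left_commute)
      qed (simp add: Pp_def)
    qed
    also have "\<dots> = (3 * S + 3 * ennreal \<epsilon> * D) * ennreal \<epsilon> + (3 * ennreal ((L + 1) * \<epsilon>) * ennreal \<epsilon>) * D"
      using Km e0 a2 by (simp add: nn_integral_add nn_integral_cmult nn_integral_cmult_indicator DK)
    also have "\<dots> = ennreal \<epsilon> * (3 * S + (3 * ennreal \<epsilon> + 3 * ennreal ((L + 1) * \<epsilon>)) * D)"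
      by (simp add: algebra_simps)
    also have "3 * ennreal \<epsilon> + 3 * ennreal ((L + 1) * \<epsilon>) = ennreal (3 * \<epsilon> + 3 * ((L + 1) * \<epsilon>))"
    proof -
      have "ennreal (3 * \<epsilon> + 3 * ((L + 1) * \<epsilon>)) = ennreal (3 * \<epsilon>) + ennreal (3 * ((L + 1) * \<epsilon>))"
        using e0 L0 by (intro ennreal_plus) auto
      also have "\<dots> = 3 * ennreal \<epsilon> + 3 * ennreal ((L + 1) * \<epsilon>)"
        using e0 L0 by (simp add: ennreal_mult)
      finally show ?thesis by simp
    qed
    finally have A: "(\<integral>\<^sup>+x. Pp x \<partial>lborel) \<le> 3 * S + ennreal (3 * \<epsilon> + 3 * ((L + 1) * \<epsilon>)) * D"
      using e0 by (subst (asm) ennreal_mult_le_mult_iff) auto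
    also have "\<dots> \<le> 3 * (S + T) + ennreal (6 * (L + 1) * \<epsilon>) * D"
    proof (intro add_mono mult_right_mono ennreal_leI)
      show "3 * S \<le> 3 * (S + T)" by (intro mult_left_mono) auto
      show "3 * \<epsilon> + 3 * ((L + 1) * \<epsilon>) \<le> 6 * (L + 1) * \<epsilon>" using L0 e0 by (simp add: algebra_simps)
    qed auto
    finally show ?thesis .
  next
    case False
    have pt2: "Pp x0 \<le> 2 * Tp x0 + 2 * ennreal ((2 * L + 1) * \<epsilon>) * K x0" for x0
    proof (cases "x0 \<in> {a1<..<a2}")
      case x0: True
      have inR_v: "(x0, r) \<in> R" if r: "r \<in> {g x0<..<g x0 + b}" for r
        using r x0 by (auto simp: R_def)
      have v1: "ennreal ((u (x0, g x0 + b) - u (x0, g x0))\<^sup>2) \<le> ennreal ((2 * L + 1) * \<epsilon>) * K x0"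
      proof -
        have "ennreal ((u (x0, g x0 + b) - u (x0, g x0))\<^sup>2) \<le> ennreal (g x0 + b - g x0) * K x0"
          by (rule vb) (use b0 inR_v in auto)
        also have "\<dots> \<le> ennreal ((2 * L + 1) * \<epsilon>) * K x0" using False
          by (intro mult_right_mono ennreal_leI) auto
        finally show ?thesis .
      qed
      have "ennreal ((u (x0, g x0))\<^sup>2) = ennreal ((u (x0, g x0 + b) - (u (x0, g x0 + b) - u (x0, g x0)))\<^sup>2)"
        by simp
      also have "\<dots> \<le> 2 * ennreal ((u (x0, g x0 + b))\<^sup>2) + 2 * ennreal ((u (x0, g x0 + b) - u (x0, g x0))\<^sup>2)"
        by (rule ennreal_sq2)
      also have "\<dots> \<le> 2 * ennreal ((u (x0, g x0 + b))\<^sup>2) + 2 * (ennreal ((2 * L + 1) * \<epsilon>) * K x0)"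
        using v1 by (intro add_mono mult_left_mono) auto
      finally show ?thesis using x0 by (simp add: Pp_def Tp_def mult.assoc)
    qed (simp add: Pp_def)
    have "(\<integral>\<^sup>+x. Pp x \<partial>lborel) \<le> (\<integral>\<^sup>+x. 2 * Tp x + 2 * ennreal ((2 * L + 1) * \<epsilon>) * K x \<partial>lborel)"
      by (rule nn_integral_mono) (rule pt2)
    also have "\<dots> = 2 * T + 2 * ennreal ((2 * L + 1) * \<epsilon>) * D"
      using Tpm' Km by (simp add: nn_integral_add nn_integral_cmult T_def DK)
    also have "\<dots> \<le> 3 * (S + T) + ennreal (6 * (L + 1) * \<epsilon>) * D"
    proof (intro add_mono)
      show "2 * T \<le> 3 * (S + T)"
      proof -
        have "2 * T \<le> 3 * T" by (intro mult_right_mono) auto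
        also have "\<dots> \<le> 3 * (S + T)" by (intro mult_left_mono) auto
        finally show ?thesis .
      qed
      have "2 * ennreal ((2 * L + 1) * \<epsilon>) = ennreal (2 * ((2 * L + 1) * \<epsilon>))"
        using L0 e0 by (simp add: ennreal_mult)
      also have "\<dots> \<le> ennreal (6 * (L + 1) * \<epsilon>)" using L0 e0 by (intro ennreal_leI) (simp add: algebra_simps)
      finally show "2 * ennreal ((2 * L + 1) * \<epsilon>) * D \<le> ennreal (6 * (L + 1) * \<epsilon>) * D"
        by (rule mult_right_mono) simp
    qed
    finally show ?thesis .
  qed
  then show ?thesis by (simp add: Pp_def S_def Sd_def T_def Tp_def)
qed

lemma key_ineq:
  fixes u :: "pt \<Rightarrow> real" and G :: "pt \<Rightarrow> pt" and g :: "real \<Rightarrow> real"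
  assumes der: "\<And>z. (u has_derivative (\<lambda>h. G z \<bullet> h)) (at z)" and cG: "continuous_on UNIV G"
    and lip: "L-lipschitz_on UNIV g" and a12: "a1 < a2" and b0: "b > 0"
    and R_def: "R = {(x, y). a1 < x \<and> x < a2 \<and> g x < y \<and> y < g x + b}"
  shows "(\<integral>\<^sup>+x. ennreal ((u (x, g x))\<^sup>2) * indicator {a1<..<a2} x \<partial>lborel)
    \<le> 3 * ((\<integral>\<^sup>+y. ennreal ((u (a1, y))\<^sup>2) * indicator {g a1<..<g a1 + b} y \<partial>lborel)
           + (\<integral>\<^sup>+x. ennreal ((u (x, g x + b))\<^sup>2) * indicator {a1<..<a2} x \<partial>lborel))
      + ennreal (6 * (L + 1) * (a2 - a1)) * (\<integral>\<^sup>+z. ennreal (indicator R z * (norm (G z))\<^sup>2) \<partial>lborel)"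
proof -
  define \<epsilon> where "\<epsilon> = a2 - a1"
  have e0: "\<epsilon> > 0" using a12 by (simp add: \<epsilon>_def)
  have L0: "L \<ge> 0" using lip lipschitz_on_nonneg by blast
  have gl: "\<bar>g s - g x\<bar> \<le> L * \<epsilon>" if "s \<in> {a1..a2}" "x \<in> {a1..a2}" for s x
  proof -
    have "\<bar>g s - g x\<bar> \<le> L * \<bar>s - x\<bar>" using lipschitz_onD[OF lip, of s x] by (simp add: dist_real_def)
    also have "\<bar>s - x\<bar> \<le> \<epsilon>" using that by (auto simp: \<epsilon>_def abs_le_iff)
    then have "L * \<bar>s - x\<bar> \<le> L * \<epsilon>" using L0 by (rule mult_left_mono)
    finally show ?thesis .
  qed
  have cg: "continuous_on UNIV g" using lip by (rule lipschitz_on_continuous_on)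
  have cu: "continuous_on UNIV u"
    using der has_derivative_continuous continuous_at_imp_continuous_on by blast
  have Req: "R = {z. a1 < fst z} \<inter> {z. fst z < a2} \<inter> {z. g (fst z) < snd z} \<inter> {z. snd z < g (fst z) + b}"
    by (auto simp: R_def)
  have Ropen: "open R" unfolding Req
    by (intro open_Int open_Collect_less continuous_intros continuous_on_compose2[OF cg]) auto
  have Rb[measurable]: "R \<in> sets borel" using Ropen by simp
  have Gm[measurable]: "G \<in> borel_measurable borel" using cG by (rule borel_measurable_continuous_onI)
  define E where "E z = ennreal (indicator R z * (norm (G z))\<^sup>2)" for z
  have Em: "E \<in> borel_measurable borel" unfolding E_def by measurable
  define D where "D = (\<integral>\<^sup>+z. E z \<partial>lborel)"
  define K where "K x = (\<integral>\<^sup>+r. E (x, r) \<partial>lborel)" for x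
  define Hh where "Hh y = (\<integral>\<^sup>+s. E (s, y) \<partial>lborel)" for y
  have DK: "(\<integral>\<^sup>+x. K x \<partial>lborel) = D" using Fub1[OF Em] by (simp add: K_def D_def)
  have DH: "(\<integral>\<^sup>+y. Hh y \<partial>lborel) = D" using Fub2[OF Em] by (simp add: Hh_def D_def)
  have Km: "K \<in> borel_measurable borel" unfolding K_def[abs_def] by (rule Fub1_meas[OF Em])
  have Hm: "Hh \<in> borel_measurable borel" unfolding Hh_def[abs_def] by (rule Fub2_meas[OF Em])
  define Sd where "Sd y = ennreal ((u (a1, y))\<^sup>2) * indicator {g a1<..<g a1 + b} y" for y
  define Tp where "Tp x = ennreal ((u (x, g x + b))\<^sup>2) * indicator {a1<..<a2} x" for x
  define Pp where "Pp x = ennreal ((u (x, g x))\<^sup>2) * indicator {a1<..<a2} x" for x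
  have Sdm: "Sd \<in> borel_measurable borel" unfolding Sd_def
    by (intro cont_ind_meas continuous_intros continuous_on_compose2[OF cu]) auto
  have Tpm: "Tp \<in> borel_measurable borel" unfolding Tp_def
    by (intro cont_ind_meas continuous_intros continuous_on_compose2[OF cu] continuous_on_compose2[OF cg]) auto
  have Ppm: "Pp \<in> borel_measurable borel" unfolding Pp_def
    by (intro cont_ind_meas continuous_intros continuous_on_compose2[OF cu] continuous_on_compose2[OF cg]) auto
  define S where "S = (\<integral>\<^sup>+y. Sd y \<partial>lborel)"
  define T where "T = (\<integral>\<^sup>+x. Tp x \<partial>lborel)"
  have vb: "ennreal ((u (x0, y') - u (x0, a'))\<^sup>2) \<le> ennreal (y' - a') * K x0"
    if "a' \<le> y'" "\<And>r. r \<in> {a'<..<y'} \<Longrightarrow> (x0, r) \<in> R" for x0 a' y'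
  proof -
    have "ennreal ((u (x0, y') - u (x0, a'))\<^sup>2) \<le>
        ennreal (y' - a') * (\<integral>\<^sup>+ r. ennreal ((snd (G (x0, r)))\<^sup>2) * indicator {a'<..<y'} r \<partial>lborel)"
      by (rule seg_v[OF der cG that(1)])
    also have "(\<integral>\<^sup>+ r. ennreal ((snd (G (x0, r)))\<^sup>2) * indicator {a'<..<y'} r \<partial>lborel) \<le> K x0"
      unfolding K_def E_def
    proof (rule nn_integral_mono)
      fix r show "ennreal ((snd (G (x0, r)))\<^sup>2) * indicator {a'<..<y'} r \<le> ennreal (indicator R (x0, r) * (norm (G (x0, r)))\<^sup>2)"
        by (cases "r \<in> {a'<..<y'}") (auto simp: that(2) intro: ennreal_leI snd_sq_le)
    qed
    then have "ennreal (y' - a') * (\<integral>\<^sup>+ r. ennreal ((snd (G (x0, r)))\<^sup>2) * indicator {a'<..<y'} r \<partial>lborel) \<le> ennreal (y' - a') * K x0"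
      by (rule mult_left_mono) simp
    finally show ?thesis .
  qed
  have hb: "ennreal ((u (x0, y) - u (a1, y))\<^sup>2) \<le> ennreal (x0 - a1) * Hh y"
    if "a1 \<le> x0" "\<And>s. s \<in> {a1<..<x0} \<Longrightarrow> (s, y) \<in> R" for x0 y
  proof -
    have "ennreal ((u (x0, y) - u (a1, y))\<^sup>2) \<le>
        ennreal (x0 - a1) * (\<integral>\<^sup>+ s. ennreal ((fst (G (s, y)))\<^sup>2) * indicator {a1<..<x0} s \<partial>lborel)"
      by (rule seg_h[OF der cG that(1)])
    also have "(\<integral>\<^sup>+ s. ennreal ((fst (G (s, y)))\<^sup>2) * indicator {a1<..<x0} s \<partial>lborel) \<le> Hh y"
      unfolding Hh_def E_def
    proof (rule nn_integral_mono)
      fix s show "ennreal ((fst (G (s, y)))\<^sup>2) * indicator {a1<..<x0} s \<le> ennreal (indicator R (s, y) * (norm (G (s, y)))\<^sup>2)"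
        by (cases "s \<in> {a1<..<x0}") (auto simp: that(2) intro: ennreal_leI fst_sq_le)
    qed
    then have "ennreal (x0 - a1) * (\<integral>\<^sup>+ s. ennreal ((fst (G (s, y)))\<^sup>2) * indicator {a1<..<x0} s \<partial>lborel) \<le> ennreal (x0 - a1) * Hh y"
      by (rule mult_left_mono) simp
    finally show ?thesis .
  qed
  have a2': "a2 = a1 + \<epsilon>" by (simp add: \<epsilon>_def)
  have Sdm': "(\<lambda>y. ennreal ((u (a1, y))\<^sup>2) * indicator {g a1<..<g a1 + b} y) \<in> borel_measurable borel"
    using Sdm by (simp add: Sd_def[abs_def])
  have Tpm': "(\<lambda>x. ennreal ((u (x, g x + b))\<^sup>2) * indicator {a1<..<a2} x) \<in> borel_measurable borel"
    using Tpm by (simp add: Tp_def[abs_def])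
  have Ppm': "(\<lambda>x. ennreal ((u (x, g x))\<^sup>2) * indicator {a1<..<a2} x) \<in> borel_measurable borel"
    using Ppm by (simp add: Pp_def[abs_def])
  have "(\<integral>\<^sup>+x. ennreal ((u (x, g x))\<^sup>2) * indicator {a1<..<a2} x \<partial>lborel)
    \<le> 3 * ((\<integral>\<^sup>+y. ennreal ((u (a1, y))\<^sup>2) * indicator {g a1<..<g a1 + b} y \<partial>lborel)
           + (\<integral>\<^sup>+x. ennreal ((u (x, g x + b))\<^sup>2) * indicator {a1<..<a2} x \<partial>lborel))
      + ennreal (6 * (L + 1) * \<epsilon>) * D"
    by (rule key_core[OF e0 a2' L0 b0 _ R_def vb hb DK DH Km Hm Sdm' Tpm' Ppm'])
       (use gl in auto)
  then show ?thesis by (simp add: D_def E_def \<epsilon>_def)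
qed

lemma dist_same_fst: "dist ((x::real), (y1::real)) (x, y2) = \<bar>y1 - y2\<bar>"
  by (simp add: dist_prod_def dist_real_def)
lemma dist_same_snd: "dist ((x1::real), (y::real)) (x2, y) = \<bar>x1 - x2\<bar>"
  by (simp add: dist_prod_def dist_real_def)

lemma clamp_lip:
  fixes g :: "real \<Rightarrow> real"
  assumes lip: "L-lipschitz_on {0..a0} g" and a: "0 \<le> a1" "a1 < a2" "a2 \<le> a0"
  shows "L-lipschitz_on UNIV (\<lambda>x. g (max a1 (min a2 x)))"
proof (rule lipschitz_onI)
  show "0 \<le> L" using lip lipschitz_on_nonneg by blast
  fix x y :: real
  have m: "max a1 (min a2 x) \<in> {0..a0}" "max a1 (min a2 y) \<in> {0..a0}" using a by auto
  have "dist (g (max a1 (min a2 x))) (g (max a1 (min a2 y))) \<le> L * dist (max a1 (min a2 x)) (max a1 (min a2 y))"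
    by (rule lipschitz_onD[OF lip m])
  also have "dist (max a1 (min a2 x)) (max a1 (min a2 y)) \<le> dist x y"
    by (auto simp: dist_real_def)
  then have "L * dist (max a1 (min a2 x)) (max a1 (min a2 y)) \<le> L * dist x y"
    using \<open>0 \<le> L\<close> by (rule mult_left_mono)
  finally show "dist (g (max a1 (min a2 x))) (g (max a1 (min a2 y))) \<le> L * dist x y" .
qed

locale geo =
  fixes g :: "real \<Rightarrow> real" and L a1 a2 b :: real
  assumes lip: "L-lipschitz_on UNIV g" and a12: "a1 < a2" and b0: "b > 0"
begin

definition "R = {(x, y). a1 < x \<and> x < a2 \<and> g x < y \<and> y < g x + b}"
definition "\<Gamma> = {z. a1 < fst z \<and> fst z < a2 \<and> snd z = g (fst z)}"

lemma L0: "L \<ge> 0" using lip lipschitz_on_nonneg by blast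
lemma cg: "continuous_on UNIV g" using lip by (rule lipschitz_on_continuous_on)

lemma R_open: "open R"
proof -
  have Req: "R = {z. a1 < fst z} \<inter> {z. fst z < a2} \<inter> {z. g (fst z) < snd z} \<inter> {z. snd z < g (fst z) + b}"
    by (auto simp: R_def)
  show ?thesis unfolding Req
    by (intro open_Int open_Collect_less continuous_intros continuous_on_compose2[OF cg]) auto
qed

lemma R_borel: "R \<in> sets borel" using R_open by simp

lemma Gamma_borel: "\<Gamma> \<in> sets borel"
proof -
  have eq: "\<Gamma> = ({z. a1 < fst z} \<inter> {z. fst z < a2}) \<inter> {z. snd z = g (fst z)}"
    by (auto simp: \<Gamma>_def)
  have o: "open ({z::pt. a1 < fst z} \<inter> {z. fst z < a2})"
    by (intro open_Int open_Collect_less continuous_intros)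
  have c: "closed {z::pt. snd z = g (fst z)}"
    by (intro closed_Collect_eq continuous_intros continuous_on_compose2[OF cg]) auto
  show ?thesis unfolding eq using o c by (intro sets.Int borel_open borel_closed)
qed

lemma frontier_R: "frontier R = closure R - R"
  using R_open by (simp add: frontier_def interior_open)

lemma Gamma_frontier: "\<Gamma> \<subseteq> frontier R"
proof
  fix z assume z: "z \<in> \<Gamma>"
  obtain x y where xy: "z = (x, y)" by (cases z)
  have x: "a1 < x" "x < a2" "y = g x" using z xy by (auto simp: \<Gamma>_def)
  have "z \<notin> R" using x xy by (auto simp: R_def)
  moreover have "z \<in> closure R"
    unfolding closure_approachable
  proof (intro allI impI)
    fix e :: real assume e: "e > 0"
    define t where "t = min (e / 2) (b / 2)"
    have t: "t > 0" "t < e" "t < b" using e b0 by (auto simp: t_def)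
    have "(x, g x + t) \<in> R" using x t by (auto simp: R_def)
    moreover have "dist (x, g x + t) z < e" using t x xy by (simp add: dist_same_fst)
    ultimately show "\<exists>w\<in>R. dist w z < e" by blast
  qed
  ultimately show "z \<in> frontier R" by (simp add: frontier_R)
qed

lemma top_frontier: "x \<in> {a1<..<a2} \<Longrightarrow> (x, g x + b) \<in> frontier R - \<Gamma>"
proof -
  assume x: "x \<in> {a1<..<a2}"
  have "(x, g x + b) \<notin> R" by (auto simp: R_def)
  moreover have "(x, g x + b) \<notin> \<Gamma>" using b0 by (auto simp: \<Gamma>_def)
  moreover have "(x, g x + b) \<in> closure R"
    unfolding closure_approachable
  proof (intro allI impI)
    fix e :: real assume e: "e > 0"
    define t where "t = min (e / 2) (b / 2)"
    have t: "t > 0" "t < e" "t < b" using e b0 by (auto simp: t_def)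
    have "(x, g x + b - t) \<in> R" using x t by (auto simp: R_def)
    moreover have "dist (x, g x + b - t) (x, g x + b) < e" using t by (simp add: dist_same_fst)
    ultimately show "\<exists>w\<in>R. dist w (x, g x + b) < e" by blast
  qed
  ultimately show ?thesis by (simp add: frontier_R)
qed

lemma side_frontier: "y \<in> {g a1<..<g a1 + b} \<Longrightarrow> (a1, y) \<in> frontier R - \<Gamma>"
proof -
  assume y: "y \<in> {g a1<..<g a1 + b}"
  have "(a1, y) \<notin> R" by (auto simp: R_def)
  moreover have "(a1, y) \<notin> \<Gamma>" by (auto simp: \<Gamma>_def)
  moreover have "(a1, y) \<in> closure R"
    unfolding closure_approachable
  proof (intro allI impI)
    fix e :: real assume e: "e > 0"
    define m where "m = min (y - g a1) (g a1 + b - y)"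
    have m: "m > 0" using y by (auto simp: m_def)
    define t where "t = min (e / 2) (min ((a2 - a1) / 2) (m / (2 * (L + 1))))"
    have L0': "L + 1 > 0" using L0 by simp
    have t': "t \<le> (a2 - a1) / 2" "t \<le> e / 2" unfolding t_def by linarith+
    have t0: "t > 0" using e a12 m L0' by (auto simp: t_def)
    have t1: "t < e" using t' t0 e by linarith
    have "(a2 - a1) / 2 < a2 - a1" using a12 by simp
    then have t2: "t < a2 - a1" using t'(1) by linarith
    note t = t0 t1 t2
    have tm: "t \<le> m / (2 * (L + 1))" by (simp add: t_def)
    have "L * t \<le> (L + 1) * t" using t by (simp add: algebra_simps)
    also have "\<dots> \<le> (L + 1) * (m / (2 * (L + 1)))" using tm L0' by (intro mult_left_mono) auto
    also have "\<dots> = m / 2" using L0' by (simp add: field_simps)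
    finally have Lt: "L * t < m" using m by simp
    have "\<bar>g (a1 + t) - g a1\<bar> \<le> L * \<bar>(a1 + t) - a1\<bar>"
      using lipschitz_onD[OF lip, of "a1 + t" a1] by (simp add: dist_real_def)
    then have "\<bar>g (a1 + t) - g a1\<bar> < m" using Lt t by simp
    then have "(a1 + t, y) \<in> R" using t by (auto simp: R_def m_def abs_less_iff)
    moreover have "dist (a1 + t, y) (a1, y) < e" using t by (simp add: dist_same_snd)
    ultimately show "\<exists>w\<in>R. dist w (a1, y) < e" by blast
  qed
  ultimately show ?thesis by (simp add: frontier_R)
qed

end

lemma dist_pair_le: "dist ((a::real), (b::real)) (c, d) \<le> \<bar>a - c\<bar> + \<bar>b - d\<bar>"
proof -
  have "dist (a, b) (c, d) = sqrt ((a - c)\<^sup>2 + (b - d)\<^sup>2)" by (simp add: dist_prod_def dist_real_def)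
  also have "\<dots> \<le> sqrt ((\<bar>a - c\<bar> + \<bar>b - d\<bar>)\<^sup>2)"
    by (intro real_sqrt_le_mono) (simp add: power2_eq_square algebra_simps)
  also have "\<dots> = \<bar>a - c\<bar> + \<bar>b - d\<bar>" by simp
  finally show ?thesis .
qed

lemma snd_abs_le: "\<bar>snd z - snd (w::pt)\<bar> \<le> dist z w"
  using dist_snd_le[of z w] by (simp add: dist_real_def)
lemma fst_abs_le: "\<bar>fst z - fst (w::pt)\<bar> \<le> dist z w"
  using dist_fst_le[of z w] by (simp add: dist_real_def)

context geo
begin

lemma graph_lip: "(1 + L)-lipschitz_on UNIV (\<lambda>x. (x, g x))"
proof (rule lipschitz_onI)
  show "0 \<le> 1 + L" using L0 by simp
  fix x y :: real
  have "dist (x, g x) (y, g y) \<le> \<bar>x - y\<bar> + \<bar>g x - g y\<bar>" by (rule dist_pair_le)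
  also have "\<bar>g x - g y\<bar> \<le> L * \<bar>x - y\<bar>" using lipschitz_onD[OF lip, of x y] by (simp add: dist_real_def)
  finally show "dist (x, g x) (y, g y) \<le> (1 + L) * dist x y" by (simp add: dist_real_def algebra_simps)
qed

lemma ends_AE: "(\<integral>\<^sup>+x. f x * indicator {a1..a2} x \<partial>lborel) = (\<integral>\<^sup>+x. f x * indicator {a1<..<a2} x \<partial>lborel)"
proof (rule nn_integral_cong_AE)
  have "AE x in lborel. x \<noteq> a1" "AE x in lborel. x \<noteq> a2" by (rule AE_lborel_singleton)+
  then show "AE x in lborel. f x * indicator {a1..a2} x = f x * indicator {a1<..<a2} x"
    by eventually_elim (auto simp: indicator_def)
qed

lemma H1_upper:
  assumes H: "\<And>X. X \<in> sets borel \<Longrightarrow> emeasure H1 X = hausdorff1 X" and cu: "continuous_on UNIV u"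
  shows "(\<integral>\<^sup>+z. ennreal ((u z)\<^sup>2) * indicator \<Gamma> z \<partial>H1)
     \<le> ennreal (1 + L) * (\<integral>\<^sup>+x. ennreal ((u (x, g x))\<^sup>2) * indicator {a1<..<a2} x \<partial>lborel)"
proof -
  have sub: "\<Gamma> \<subseteq> (\<lambda>x. (x, g x)) ` {a1..a2}"
  proof
    fix z assume "z \<in> \<Gamma>"
    then have "z = (fst z, g (fst z))" "fst z \<in> {a1..a2}" by (auto simp: \<Gamma>_def prod_eq_iff)
    then show "z \<in> (\<lambda>x. (x, g x)) ` {a1..a2}" by (metis image_eqI)
  qed
  have "(\<integral>\<^sup>+z. ennreal ((u z)\<^sup>2) * indicator \<Gamma> z \<partial>H1)
      \<le> (\<integral>\<^sup>+z. ennreal ((u z)\<^sup>2) * indicator ((\<lambda>x. (x, g x)) ` {a1..a2}) z \<partial>H1)"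
    using sub by (intro nn_integral_mono mult_left_mono) (auto simp: indicator_def)
  also have "\<dots> \<le> ennreal (1 + L) * (\<integral>\<^sup>+x. ennreal ((u (x, g x))\<^sup>2) * indicator {a1..a2} x \<partial>lborel)"
    by (rule int_upper[OF H lipschitz_on_subset[OF graph_lip] a12])
       (auto intro!: continuous_intros continuous_on_compose2[OF cg] continuous_on_compose2[OF cu])
  also have "(\<integral>\<^sup>+x. ennreal ((u (x, g x))\<^sup>2) * indicator {a1..a2} x \<partial>lborel)
      = (\<integral>\<^sup>+x. ennreal ((u (x, g x))\<^sup>2) * indicator {a1<..<a2} x \<partial>lborel)"
    by (rule ends_AE)
  finally show ?thesis .
qed

lemma H1_side:
  assumes H: "\<And>X. X \<in> sets borel \<Longrightarrow> emeasure H1 X = hausdorff1 X" and cu: "continuous_on UNIV u"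
  shows "(\<integral>\<^sup>+y. ennreal ((u (a1, y))\<^sup>2) * indicator {g a1<..<g a1 + b} y \<partial>lborel)
     \<le> (\<integral>\<^sup>+z. ennreal ((u z)\<^sup>2) * indicator (frontier R - \<Gamma>) z \<partial>H1)"
proof -
  have "(\<integral>\<^sup>+y. ennreal ((u (a1, y))\<^sup>2) * indicator {g a1<..<g a1 + b} y \<partial>lborel)
      \<le> (\<integral>\<^sup>+z. ennreal ((u z)\<^sup>2) * indicator ((\<lambda>y. (a1, y)) ` {g a1<..<g a1 + b}) z \<partial>H1)"
    by (rule int_lower[OF H _ _ _ snd_abs_le, of "g a1" "g a1 + b" "\<lambda>y. (a1, y)" "\<lambda>z. (u z)\<^sup>2"])
       (use b0 in \<open>auto intro!: continuous_intros continuous_on_compose2[OF cu]\<close>)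
  also have "\<dots> \<le> (\<integral>\<^sup>+z. ennreal ((u z)\<^sup>2) * indicator (frontier R - \<Gamma>) z \<partial>H1)"
    using side_frontier by (intro nn_integral_mono mult_left_mono) (auto simp: indicator_def)
  finally show ?thesis .
qed

lemma H1_top:
  assumes H: "\<And>X. X \<in> sets borel \<Longrightarrow> emeasure H1 X = hausdorff1 X" and cu: "continuous_on UNIV u"
  shows "(\<integral>\<^sup>+x. ennreal ((u (x, g x + b))\<^sup>2) * indicator {a1<..<a2} x \<partial>lborel)
     \<le> (\<integral>\<^sup>+z. ennreal ((u z)\<^sup>2) * indicator (frontier R - \<Gamma>) z \<partial>H1)"
proof -
  have "(\<integral>\<^sup>+x. ennreal ((u (x, g x + b))\<^sup>2) * indicator {a1<..<a2} x \<partial>lborel)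
      \<le> (\<integral>\<^sup>+z. ennreal ((u z)\<^sup>2) * indicator ((\<lambda>x. (x, g x + b)) ` {a1<..<a2}) z \<partial>H1)"
    by (rule int_lower[OF H _ _ _ fst_abs_le, of a1 a2 "\<lambda>x. (x, g x + b)" "\<lambda>z. (u z)\<^sup>2"])
       (use a12 in \<open>auto intro!: continuous_intros continuous_on_compose2[OF cu] continuous_on_compose2[OF cg]\<close>)
  also have "\<dots> \<le> (\<integral>\<^sup>+z. ennreal ((u z)\<^sup>2) * indicator (frontier R - \<Gamma>) z \<partial>H1)"
    using top_frontier by (intro nn_integral_mono mult_left_mono) (auto simp: indicator_def)
  finally show ?thesis .
qed

end

lemma basis10: "((1::real), (0::real)) \<in> (Basis :: pt set)" by (simp add: Basis_prod_def)
lemma basis01: "((0::real), (1::real)) \<in> (Basis :: pt set)" by (simp add: Basis_prod_def)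

lemma ind_norm_sq: "indicator R x * (norm (y::pt))\<^sup>2 = (norm (indicator R x *\<^sub>R y))\<^sup>2"
  by (simp add: indicator_def)

lemma w_facts:
  fixes w :: "pt \<Rightarrow> pt"
  assumes Hw: "H1_weak_grad R v w"
  shows "(\<lambda>x. indicator R x *\<^sub>R w x) \<in> borel_measurable borel"
    and "integrable lborel (\<lambda>x. indicator R x * (norm (w x))\<^sup>2)"
proof -
  have L1: "L2_on R (\<lambda>x. w x \<bullet> (1, 0))" and L2: "L2_on R (\<lambda>x. w x \<bullet> (0, 1))"
    using Hw basis10 basis01 unfolding H1_weak_grad_def by auto
  have m1: "(\<lambda>x. indicator R x * fst (w x)) \<in> borel_measurable borel"
    using L1 unfolding L2_on_def set_borel_measurable_def by (simp add: inner_10)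
  have m2: "(\<lambda>x. indicator R x * snd (w x)) \<in> borel_measurable borel"
    using L2 unfolding L2_on_def set_borel_measurable_def by (simp add: inner_01)
  have "(\<lambda>x. (indicator R x * fst (w x), indicator R x * snd (w x))) \<in> borel \<rightarrow>\<^sub>M (borel \<Otimes>\<^sub>M borel)"
    by (rule measurable_Pair[OF m1 m2])
  then have "(\<lambda>x. (indicator R x * fst (w x), indicator R x * snd (w x))) \<in> borel_measurable borel"
    by (simp add: borel_prod)
  moreover have "(\<lambda>x. indicator R x *\<^sub>R w x) = (\<lambda>x. (indicator R x * fst (w x), indicator R x * snd (w x)))"
    by (auto simp: indicator_def prod_eq_iff)
  ultimately show "(\<lambda>x. indicator R x *\<^sub>R w x) \<in> borel_measurable borel" by simp
  have i1: "integrable lborel (\<lambda>x. indicator R x * (fst (w x))\<^sup>2)"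
    using L1 unfolding L2_on_def set_integrable_def by (simp add: inner_10)
  have i2: "integrable lborel (\<lambda>x. indicator R x * (snd (w x))\<^sup>2)"
    using L2 unfolding L2_on_def set_integrable_def by (simp add: inner_01)
  have "integrable lborel (\<lambda>x. indicator R x * (fst (w x))\<^sup>2 + indicator R x * (snd (w x))\<^sup>2)"
    by (rule Bochner_Integration.integrable_add[OF i1 i2])
  moreover have "(\<lambda>x. indicator R x * (fst (w x))\<^sup>2 + indicator R x * (snd (w x))\<^sup>2) = (\<lambda>x. indicator R x * (norm (w x))\<^sup>2)"
  proof
    fix x show "indicator R x * (fst (w x))\<^sup>2 + indicator R x * (snd (w x))\<^sup>2 = indicator R x * (norm (w x))\<^sup>2"
      by (cases "w x") (simp add: norm_Pair algebra_simps)
  qed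
  ultimately show "integrable lborel (\<lambda>x. indicator R x * (norm (w x))\<^sup>2)" by simp
qed

lemma W_nn:
  fixes w :: "pt \<Rightarrow> pt"
  assumes "integrable lborel (\<lambda>x. indicator R x * (norm (w x))\<^sup>2)"
  shows "(\<integral>\<^sup>+x. ennreal (indicator R x * (norm (w x))\<^sup>2) \<partial>lborel) = ennreal (LINT x:R|lborel. (norm (w x))\<^sup>2)"
    and "0 \<le> (LINT x:R|lborel. (norm (w x))\<^sup>2)"
proof -
  show "(\<integral>\<^sup>+x. ennreal (indicator R x * (norm (w x))\<^sup>2) \<partial>lborel) = ennreal (LINT x:R|lborel. (norm (w x))\<^sup>2)"
    unfolding set_lebesgue_integral_def by (simp add: nn_integral_eq_integral[OF assms])
  show "0 \<le> (LINT x:R|lborel. (norm (w x))\<^sup>2)"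
    unfolding set_lebesgue_integral_def by (intro integral_nonneg_AE) (auto simp: indicator_def)
qed

lemma H1_cases:
  "(\<forall>B. emeasure H1 B = 0) \<or> (\<forall>X\<in>sets borel. emeasure H1 X = hausdorff1 X)"
proof -
  have ss: "sigma_sets UNIV (sets borel) = sets (borel :: pt measure)"
    by (metis sets.sigma_sets_eq space_borel)
  have em: "emeasure H1 = (\<lambda>B. if B \<in> sigma_sets UNIV (sets borel) \<and> measure_space UNIV (sigma_sets UNIV (sets borel)) hausdorff1 then hausdorff1 B else 0)"
    unfolding H1_def by (rule emeasure_measure_of_conv)
  show ?thesis
  proof (cases "measure_space UNIV (sigma_sets UNIV (sets borel)) (hausdorff1 :: pt set \<Rightarrow> ennreal)")
    case True then show ?thesis using em ss by auto
  next
    case False then show ?thesis using em by auto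
  qed
qed

lemma nn_integral_H1_zero:
  assumes "\<forall>B. emeasure H1 B = 0"
  shows "(\<integral>\<^sup>+z. f z \<partial>H1) = 0"
proof -
  have "UNIV \<in> null_sets H1" using assms sets_H1 by (simp add: null_sets_def)
  then have "AE z in H1. f z = 0" by (rule AE_I') auto
  then have "(\<integral>\<^sup>+z. f z \<partial>H1) = (\<integral>\<^sup>+z. 0 \<partial>H1)" by (rule nn_integral_cong_AE)
  then show ?thesis by simp
qed

lemma norm_sq_split: "(norm (a::pt))\<^sup>2 \<le> 2 * (norm b)\<^sup>2 + 2 * (norm (a - b))\<^sup>2"
proof -
  have "norm a \<le> norm b + norm (a - b)" by (metis add.commute diff_add_cancel norm_triangle_ineq)
  then have "(norm a)\<^sup>2 \<le> (norm b + norm (a - b))\<^sup>2" by (simp add: power_mono)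
  also have "\<dots> \<le> 2 * (norm b)\<^sup>2 + 2 * (norm (a - b))\<^sup>2"
  proof -
    have "0 \<le> (norm b - norm (a - b))\<^sup>2" by simp
    then show ?thesis by (simp add: power2_eq_square algebra_simps)
  qed
  finally show ?thesis .
qed

lemma enn2: "0 \<le> x \<Longrightarrow> ennreal (2 * x) = 2 * ennreal x" by (simp add: ennreal_mult)
lemma enn3: "0 \<le> x \<Longrightarrow> ennreal (3 * x) = 3 * ennreal x" by (simp add: ennreal_mult)

lemma enn_expr:
  fixes A C W \<eta> :: real assumes A: "0 \<le> A" and C: "0 \<le> C" and W: "0 \<le> W" and e: "0 \<le> \<eta>"
  shows "2 * (ennreal A * (3 * (2 * ennreal \<eta> + 2 * ennreal \<eta>) + ennreal C * (2 * ennreal W + 2 * ennreal \<eta>))) + 2 * ennreal \<eta>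
     = ennreal (2 * (A * (3 * (2 * \<eta> + 2 * \<eta>) + C * (2 * W + 2 * \<eta>))) + 2 * \<eta>)"
proof -
  have q: "ennreal (2 * \<eta> + 2 * \<eta>) = 2 * ennreal \<eta> + 2 * ennreal \<eta>"
    using e by (subst ennreal_plus) (auto simp: enn2)
  have v: "ennreal (2 * W + 2 * \<eta>) = 2 * ennreal W + 2 * ennreal \<eta>"
    using e W by (subst ennreal_plus) (auto simp: enn2)
  have Q0: "0 \<le> 2 * \<eta> + 2 * \<eta>" "0 \<le> 2 * W + 2 * \<eta>" using e W by auto
  have x: "ennreal (3 * (2 * \<eta> + 2 * \<eta>) + C * (2 * W + 2 * \<eta>)) =
      3 * (2 * ennreal \<eta> + 2 * ennreal \<eta>) + ennreal C * (2 * ennreal W + 2 * ennreal \<eta>)"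
  proof -
    have "ennreal (3 * (2 * \<eta> + 2 * \<eta>) + C * (2 * W + 2 * \<eta>)) = ennreal (3 * (2 * \<eta> + 2 * \<eta>)) + ennreal (C * (2 * W + 2 * \<eta>))"
      using Q0 C by (intro ennreal_plus) auto
    also have "ennreal (3 * (2 * \<eta> + 2 * \<eta>)) = 3 * ennreal (2 * \<eta> + 2 * \<eta>)" by (rule enn3[OF Q0(1)])
    also have "ennreal (C * (2 * W + 2 * \<eta>)) = ennreal C * ennreal (2 * W + 2 * \<eta>)" using Q0 C by (intro ennreal_mult) auto
    finally show ?thesis unfolding q v .
  qed
  have X0: "0 \<le> 3 * (2 * \<eta> + 2 * \<eta>) + C * (2 * W + 2 * \<eta>)" using Q0 C by auto
  have "ennreal (2 * (A * (3 * (2 * \<eta> + 2 * \<eta>) + C * (2 * W + 2 * \<eta>))) + 2 * \<eta>)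
      = ennreal (2 * (A * (3 * (2 * \<eta> + 2 * \<eta>) + C * (2 * W + 2 * \<eta>)))) + ennreal (2 * \<eta>)"
    using A X0 e by (intro ennreal_plus) auto
  also have "ennreal (2 * (A * (3 * (2 * \<eta> + 2 * \<eta>) + C * (2 * W + 2 * \<eta>)))) = 2 * (ennreal A * ennreal (3 * (2 * \<eta> + 2 * \<eta>) + C * (2 * W + 2 * \<eta>)))"
    using A X0 by (simp add: enn2 ennreal_mult)
  also have "ennreal (2 * \<eta>) = 2 * ennreal \<eta>" using e by (rule enn2)
  finally show ?thesis unfolding x by simp
qed

context geo
begin

lemma core_eta:
  assumes H: "\<And>X. X \<in> sets borel \<Longrightarrow> emeasure H1 X = hausdorff1 X"
    and sm: "smooth2 U"
    and wm: "(\<lambda>x. indicator R x *\<^sub>R w x) \<in> borel_measurable borel"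
    and WW: "(\<integral>\<^sup>+x. ennreal (indicator R x * (norm (w x))\<^sup>2) \<partial>lborel) = ennreal W" and W0: "0 \<le> W"
    and tm: "t \<in> borel_measurable borel"
    and G1: "(\<integral>\<^sup>+z. ennreal ((t z)\<^sup>2) * indicator \<Gamma> z \<partial>H1) = 1"
    and AEt: "AE z in H1. z \<in> frontier R - \<Gamma> \<longrightarrow> t z = 0"
    and An: "(\<integral>\<^sup>+x. ennreal ((U x - v x)\<^sup>2 + (norm (grad U x - w x))\<^sup>2) * indicator R x \<partial>lborel) < ennreal \<eta>"
    and Bn: "(\<integral>\<^sup>+z. ennreal ((U z - t z)\<^sup>2) * indicator (frontier R) z \<partial>H1) < ennreal \<eta>"
    and \<eta>0: "\<eta> > 0"
  shows "1 \<le> 24 * (1 + L)\<^sup>2 * (a2 - a1) * W + \<eta> * (2 + 24 * (1 + L) + 24 * (1 + L)\<^sup>2 * (a2 - a1))"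
proof -
  define \<epsilon> where "\<epsilon> = a2 - a1"
  have e0: "\<epsilon> > 0" using a12 by (simp add: \<epsilon>_def)
  have der: "\<And>z. (U has_derivative (\<lambda>h. grad U z \<bullet> h)) (at z)" using smooth2_grad[OF sm] .
  have cG: "continuous_on UNIV (grad U)" by (rule smooth2_grad_cont[OF sm])
  have cU: "continuous_on UNIV U" by (rule smooth2_cont[OF sm])
  have Um[measurable]: "U \<in> borel_measurable borel" using cU by (rule borel_measurable_continuous_onI)
  have Gm[measurable]: "grad U \<in> borel_measurable borel" using cG by (rule borel_measurable_continuous_onI)
  note [measurable] = tm Gamma_borel R_borel wm
  have Fb[measurable]: "frontier R \<in> sets borel" by (simp add: borel_closed)
  define Y where "Y = (\<integral>\<^sup>+z. ennreal ((U z)\<^sup>2) * indicator \<Gamma> z \<partial>H1)"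
  define Z where "Z = (\<integral>\<^sup>+z. ennreal ((U z)\<^sup>2) * indicator (frontier R - \<Gamma>) z \<partial>H1)"
  define P where "P = (\<integral>\<^sup>+x. ennreal ((U (x, g x))\<^sup>2) * indicator {a1<..<a2} x \<partial>lborel)"
  define S where "S = (\<integral>\<^sup>+y. ennreal ((U (a1, y))\<^sup>2) * indicator {g a1<..<g a1 + b} y \<partial>lborel)"
  define T where "T = (\<integral>\<^sup>+x. ennreal ((U (x, g x + b))\<^sup>2) * indicator {a1<..<a2} x \<partial>lborel)"
  define D where "D = (\<integral>\<^sup>+z. ennreal (indicator R z * (norm (grad U z))\<^sup>2) \<partial>lborel)"
  define Bn' where "Bn' = (\<integral>\<^sup>+z. ennreal ((U z - t z)\<^sup>2) * indicator (frontier R) z \<partial>H1)"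
  have mH1: "(\<lambda>z. ennreal ((U z)\<^sup>2) * indicator \<Gamma> z) \<in> borel_measurable H1"
    "(\<lambda>z. ennreal ((U z - t z)\<^sup>2) * indicator \<Gamma> z) \<in> borel_measurable H1"
    "(\<lambda>z. ennreal ((t z)\<^sup>2) * indicator (frontier R - \<Gamma>) z) \<in> borel_measurable H1"
    "(\<lambda>z. ennreal ((U z - t z)\<^sup>2) * indicator (frontier R - \<Gamma>) z) \<in> borel_measurable H1"
    by (intro meas_H1; measurable)+
  have Ya: "1 \<le> 2 * Y + 2 * ennreal \<eta>"
  proof -
    have "1 = (\<integral>\<^sup>+z. ennreal ((t z)\<^sup>2) * indicator \<Gamma> z \<partial>H1)" using G1 by simp
    also have "\<dots> \<le> (\<integral>\<^sup>+z. 2 * (ennreal ((U z)\<^sup>2) * indicator \<Gamma> z) + 2 * (ennreal ((U z - t z)\<^sup>2) * indicator \<Gamma> z) \<partial>H1)"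
    proof (rule nn_integral_mono)
      fix z
      have "ennreal ((t z)\<^sup>2) \<le> 2 * ennreal ((U z)\<^sup>2) + 2 * ennreal ((U z - t z)\<^sup>2)"
        using ennreal_sq2[of "U z" "U z - t z"] by simp
      then show "ennreal ((t z)\<^sup>2) * indicator \<Gamma> z \<le> 2 * (ennreal ((U z)\<^sup>2) * indicator \<Gamma> z) + 2 * (ennreal ((U z - t z)\<^sup>2) * indicator \<Gamma> z)"
        by (auto simp: indicator_def)
    qed
    also have "\<dots> = 2 * Y + 2 * (\<integral>\<^sup>+z. ennreal ((U z - t z)\<^sup>2) * indicator \<Gamma> z \<partial>H1)"
      unfolding Y_def using mH1 by (simp add: nn_integral_add nn_integral_cmult)
    also have "(\<integral>\<^sup>+z. ennreal ((U z - t z)\<^sup>2) * indicator \<Gamma> z \<partial>H1) \<le> Bn'"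
      unfolding Bn'_def using Gamma_frontier by (intro nn_integral_mono mult_left_mono) (auto simp: indicator_def)
    also have "Bn' \<le> ennreal \<eta>" using Bn by (simp add: Bn'_def)
    finally show ?thesis by (simp add: add_left_mono mult_left_mono)
  qed
  have Zb: "Z \<le> 2 * ennreal \<eta>"
  proof -
    have "Z \<le> (\<integral>\<^sup>+z. 2 * (ennreal ((t z)\<^sup>2) * indicator (frontier R - \<Gamma>) z) + 2 * (ennreal ((U z - t z)\<^sup>2) * indicator (frontier R - \<Gamma>) z) \<partial>H1)"
      unfolding Z_def
    proof (rule nn_integral_mono)
      fix z
      have "ennreal ((U z)\<^sup>2) \<le> 2 * ennreal ((t z)\<^sup>2) + 2 * ennreal ((t z - U z)\<^sup>2)"
        using ennreal_sq2[of "t z" "t z - U z"] by simp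
      also have "(t z - U z)\<^sup>2 = (U z - t z)\<^sup>2" by (rule power2_commute)
      finally show "ennreal ((U z)\<^sup>2) * indicator (frontier R - \<Gamma>) z \<le> 2 * (ennreal ((t z)\<^sup>2) * indicator (frontier R - \<Gamma>) z) + 2 * (ennreal ((U z - t z)\<^sup>2) * indicator (frontier R - \<Gamma>) z)"
        by (auto simp: indicator_def)
    qed
    also have "\<dots> = 2 * (\<integral>\<^sup>+z. ennreal ((t z)\<^sup>2) * indicator (frontier R - \<Gamma>) z \<partial>H1) + 2 * (\<integral>\<^sup>+z. ennreal ((U z - t z)\<^sup>2) * indicator (frontier R - \<Gamma>) z \<partial>H1)"
      using mH1 by (simp add: nn_integral_add nn_integral_cmult)
    also have "(\<integral>\<^sup>+z. ennreal ((t z)\<^sup>2) * indicator (frontier R - \<Gamma>) z \<partial>H1) = 0"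
    proof -
      have "AE z in H1. ennreal ((t z)\<^sup>2) * indicator (frontier R - \<Gamma>) z = 0"
        using AEt by eventually_elim (auto simp: indicator_def)
      then have "(\<integral>\<^sup>+z. ennreal ((t z)\<^sup>2) * indicator (frontier R - \<Gamma>) z \<partial>H1) = (\<integral>\<^sup>+z. 0 \<partial>H1)"
        by (rule nn_integral_cong_AE)
      then show ?thesis by simp
    qed
    also have "(\<integral>\<^sup>+z. ennreal ((U z - t z)\<^sup>2) * indicator (frontier R - \<Gamma>) z \<partial>H1) \<le> Bn'"
      unfolding Bn'_def by (intro nn_integral_mono mult_left_mono) (auto simp: indicator_def)
    also have "Bn' \<le> ennreal \<eta>" using Bn by (simp add: Bn'_def)
    finally show ?thesis by (simp add: mult_left_mono)
  qed
  have Db: "D \<le> 2 * ennreal W + 2 * ennreal \<eta>"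
  proof -
    have m1: "(\<lambda>x. ennreal (indicator R x * (norm (w x))\<^sup>2)) \<in> borel_measurable lborel"
      unfolding ind_norm_sq by measurable
    have m2: "(\<lambda>x. ennreal (indicator R x * (norm (grad U x - w x))\<^sup>2)) \<in> borel_measurable lborel"
    proof -
      have "(\<lambda>x. indicator R x * (norm (grad U x - w x))\<^sup>2) = (\<lambda>x. (norm (indicator R x *\<^sub>R grad U x - indicator R x *\<^sub>R w x))\<^sup>2)"
        by (auto simp: indicator_def)
      moreover have "(\<lambda>x. (norm (indicator R x *\<^sub>R grad U x - indicator R x *\<^sub>R w x))\<^sup>2) \<in> borel_measurable borel"
        by measurable
      ultimately show ?thesis by simp
    qed
    have "D \<le> (\<integral>\<^sup>+x. 2 * ennreal (indicator R x * (norm (w x))\<^sup>2) + 2 * ennreal (indicator R x * (norm (grad U x - w x))\<^sup>2) \<partial>lborel)"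
      unfolding D_def
    proof (rule nn_integral_mono)
      fix x
      have "indicator R x * (norm (grad U x))\<^sup>2 \<le> 2 * (indicator R x * (norm (w x))\<^sup>2) + 2 * (indicator R x * (norm (grad U x - w x))\<^sup>2)"
        using norm_sq_split[of "grad U x" "w x"] by (auto simp: indicator_def)
      then have "ennreal (indicator R x * (norm (grad U x))\<^sup>2) \<le> ennreal (2 * (indicator R x * (norm (w x))\<^sup>2) + 2 * (indicator R x * (norm (grad U x - w x))\<^sup>2))"
        by (rule ennreal_leI)
      also have "\<dots> = 2 * ennreal (indicator R x * (norm (w x))\<^sup>2) + 2 * ennreal (indicator R x * (norm (grad U x - w x))\<^sup>2)"
        by (simp add: ennreal_mult)
      finally show "ennreal (indicator R x * (norm (grad U x))\<^sup>2) \<le> 2 * ennreal (indicator R x * (norm (w x))\<^sup>2) + 2 * ennreal (indicator R x * (norm (grad U x - w x))\<^sup>2)" .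
    qed
    also have "\<dots> = 2 * ennreal W + 2 * (\<integral>\<^sup>+x. ennreal (indicator R x * (norm (grad U x - w x))\<^sup>2) \<partial>lborel)"
      using m1 m2 WW by (simp add: nn_integral_add nn_integral_cmult)
    also have "(\<integral>\<^sup>+x. ennreal (indicator R x * (norm (grad U x - w x))\<^sup>2) \<partial>lborel)
        \<le> (\<integral>\<^sup>+x. ennreal ((U x - v x)\<^sup>2 + (norm (grad U x - w x))\<^sup>2) * indicator R x \<partial>lborel)"
      by (intro nn_integral_mono) (auto simp: indicator_def intro: ennreal_leI)
    also have "\<dots> \<le> ennreal \<eta>" using An by simp
    finally show ?thesis by (simp add: mult_left_mono add_left_mono)
  qed
  have Pb: "P \<le> 3 * (S + T) + ennreal (6 * (L + 1) * \<epsilon>) * D"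
    unfolding P_def S_def T_def D_def \<epsilon>_def by (rule key_ineq[OF der cG lip a12 b0 R_def])
  have Yb: "Y \<le> ennreal (1 + L) * P" unfolding Y_def P_def by (rule H1_upper[OF H cU])
  have Sb: "S \<le> Z" unfolding S_def Z_def by (rule H1_side[OF H cU])
  have Tb: "T \<le> Z" unfolding T_def Z_def by (rule H1_top[OF H cU])
  have "1 \<le> 2 * Y + 2 * ennreal \<eta>" by (rule Ya)
  also have "\<dots> \<le> 2 * (ennreal (1 + L) * (3 * (2 * ennreal \<eta> + 2 * ennreal \<eta>) + ennreal (6 * (L + 1) * \<epsilon>) * (2 * ennreal W + 2 * ennreal \<eta>))) + 2 * ennreal \<eta>"
  proof -
    have "S + T \<le> 2 * ennreal \<eta> + 2 * ennreal \<eta>" using Sb Tb Zb by (intro add_mono) auto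
    then have "P \<le> 3 * (2 * ennreal \<eta> + 2 * ennreal \<eta>) + ennreal (6 * (L + 1) * \<epsilon>) * (2 * ennreal W + 2 * ennreal \<eta>)"
      using Pb Db by (meson add_mono mult_left_mono order_trans zero_le)
    then have "Y \<le> ennreal (1 + L) * (3 * (2 * ennreal \<eta> + 2 * ennreal \<eta>) + ennreal (6 * (L + 1) * \<epsilon>) * (2 * ennreal W + 2 * ennreal \<eta>))"
      using Yb by (meson mult_left_mono order_trans zero_le)
    then show ?thesis by (intro add_right_mono mult_left_mono) auto
  qed
  also have "\<dots> = ennreal (2 * ((1 + L) * (3 * (2 * \<eta> + 2 * \<eta>) + (6 * (L + 1) * \<epsilon>) * (2 * W + 2 * \<eta>))) + 2 * \<eta>)"
    by (rule enn_expr) (use L0 e0 W0 \<eta>0 in auto)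
  finally have "1 \<le> 2 * ((1 + L) * (3 * (2 * \<eta> + 2 * \<eta>) + (6 * (L + 1) * \<epsilon>) * (2 * W + 2 * \<eta>))) + 2 * \<eta>"
    using L0 e0 W0 \<eta>0 by (subst (asm) ennreal_1[symmetric], subst (asm) ennreal_le_iff) auto
  also have "\<dots> = 24 * (1 + L)\<^sup>2 * \<epsilon> * W + \<eta> * (2 + 24 * (1 + L) + 24 * (1 + L)\<^sup>2 * \<epsilon>)"
    by (simp add: power2_eq_square algebra_simps)
  finally show ?thesis by (simp add: \<epsilon>_def)
qed

end

context geo
begin

lemma core_bound:
  assumes Hw: "H1_weak_grad R v w" and Ht: "has_trace R v w t"
    and G1: "(\<integral>\<^sup>+z. ennreal ((t z)\<^sup>2) * indicator \<Gamma> z \<partial>H1) = 1"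
    and AEt: "AE z in H1. z \<in> frontier R - \<Gamma> \<longrightarrow> t z = 0"
  shows "1 \<le> 24 * (1 + L)\<^sup>2 * (a2 - a1) * (LINT x:R|lborel. (norm (w x))\<^sup>2)"
proof -
  define W where "W = (LINT x:R|lborel. (norm (w x))\<^sup>2)"
  have wm: "(\<lambda>x. indicator R x *\<^sub>R w x) \<in> borel_measurable borel"
    and wi: "integrable lborel (\<lambda>x. indicator R x * (norm (w x))\<^sup>2)" using w_facts[OF Hw] by auto
  have WW: "(\<integral>\<^sup>+x. ennreal (indicator R x * (norm (w x))\<^sup>2) \<partial>lborel) = ennreal W"
    and W0: "0 \<le> W" using W_nn[OF wi] unfolding W_def by auto
  have tm: "t \<in> borel_measurable borel" using Ht by (simp add: has_trace_def)
  obtain u where us: "\<And>n. smooth2 (u n)"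
    and A: "(\<lambda>n. \<integral>\<^sup>+x. ennreal ((u n x - v x)\<^sup>2 + (norm (grad (u n) x - w x))\<^sup>2) * indicator R x \<partial>lborel) \<longlonglongrightarrow> 0"
    and B: "(\<lambda>n. \<integral>\<^sup>+z. ennreal ((u n z - t z)\<^sup>2) * indicator (frontier R) z \<partial>H1) \<longlonglongrightarrow> 0"
    using Ht unfolding has_trace_def by blast
  from H1_cases show ?thesis
  proof
    assume z: "\<forall>B. emeasure H1 B = 0"
    have "(\<integral>\<^sup>+z. ennreal ((t z)\<^sup>2) * indicator \<Gamma> z \<partial>H1) = 0" using nn_integral_H1_zero[OF z] .
    with G1 show ?thesis by simp
  next
    assume "\<forall>X\<in>sets borel. emeasure H1 X = hausdorff1 X"
    then have H: "\<And>X. X \<in> sets borel \<Longrightarrow> emeasure H1 X = hausdorff1 X" by blast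
    define C where "C = 2 + 24 * (1 + L) + 24 * (1 + L)\<^sup>2 * (a2 - a1)"
    have C0: "C > 0"
    proof -
      have p1: "0 < 2 + 24 * (1 + L)" using L0 by simp
      have p2: "0 \<le> 24 * (1 + L)\<^sup>2 * (a2 - a1)" using a12 by simp
      show ?thesis unfolding C_def using add_pos_nonneg[OF p1 p2] .
    qed
    show ?thesis unfolding W_def[symmetric]
    proof (rule field_le_epsilon)
      fix e :: real assume e: "0 < e"
      define \<eta> where "\<eta> = e / C"
      have \<eta>0: "\<eta> > 0" using e C0 by (simp add: \<eta>_def)
      have "eventually (\<lambda>n. (\<integral>\<^sup>+x. ennreal ((u n x - v x)\<^sup>2 + (norm (grad (u n) x - w x))\<^sup>2) * indicator R x \<partial>lborel) < ennreal \<eta>) sequentially"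
        using order_tendstoD(2)[OF A] \<eta>0 by simp
      moreover have "eventually (\<lambda>n. (\<integral>\<^sup>+z. ennreal ((u n z - t z)\<^sup>2) * indicator (frontier R) z \<partial>H1) < ennreal \<eta>) sequentially"
        using order_tendstoD(2)[OF B] \<eta>0 by simp
      ultimately have "eventually (\<lambda>n. (\<integral>\<^sup>+x. ennreal ((u n x - v x)\<^sup>2 + (norm (grad (u n) x - w x))\<^sup>2) * indicator R x \<partial>lborel) < ennreal \<eta>
          \<and> (\<integral>\<^sup>+z. ennreal ((u n z - t z)\<^sup>2) * indicator (frontier R) z \<partial>H1) < ennreal \<eta>) sequentially"
        by (rule eventually_conj)
      then obtain N where "\<forall>n\<ge>N. (\<integral>\<^sup>+x. ennreal ((u n x - v x)\<^sup>2 + (norm (grad (u n) x - w x))\<^sup>2) * indicator R x \<partial>lborel) < ennreal \<eta>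
          \<and> (\<integral>\<^sup>+z. ennreal ((u n z - t z)\<^sup>2) * indicator (frontier R) z \<partial>H1) < ennreal \<eta>"
        by (auto simp: eventually_sequentially)
      then have An: "(\<integral>\<^sup>+x. ennreal ((u N x - v x)\<^sup>2 + (norm (grad (u N) x - w x))\<^sup>2) * indicator R x \<partial>lborel) < ennreal \<eta>"
        and Bn: "(\<integral>\<^sup>+z. ennreal ((u N z - t z)\<^sup>2) * indicator (frontier R) z \<partial>H1) < ennreal \<eta>" by auto
      have "1 \<le> 24 * (1 + L)\<^sup>2 * (a2 - a1) * W + \<eta> * C"
        unfolding C_def by (rule core_eta[OF H us[of N] wm WW W0 tm G1 AEt An Bn \<eta>0])
      also have "\<eta> * C = e" using C0 by (simp add: \<eta>_def)
      finally show "1 \<le> 24 * (1 + L)\<^sup>2 * (a2 - a1) * W + e" .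
    qed
  qed
qed

end

theorem proposition4p5:
  fixes g :: "real \<Rightarrow> real" and a0 L :: real
  assumes "a0 > 0"
    and "L-lipschitz_on {0..a0} g"
    and "\<forall>x\<in>{0..a0}. g x \<ge> 0"
  shows "\<forall>M::real. \<exists>\<delta>>0. \<forall>a1 a2 b. 0 \<le> a1 \<and> a1 < a2 \<and> a2 \<le> a0 \<and> a2 - a1 < \<delta> \<and> b > 0
           \<longrightarrow> K_const (Gamma_set g a1 a2) (R_set g a1 a2 b) \<ge> ereal M"
proof (intro allI)
  fix M :: real
  have L0: "L \<ge> 0" using assms(2) lipschitz_on_nonneg by blast
  define k where "k = 24 * (1 + L)\<^sup>2"
  have k0: "k > 0" using L0 by (simp add: k_def)
  define \<delta> where "\<delta> = 1 / (k * (\<bar>M\<bar> + 1))"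
  have \<delta>0: "\<delta> > 0" using k0 by (simp add: \<delta>_def)
  show "\<exists>\<delta>>0. \<forall>a1 a2 b. 0 \<le> a1 \<and> a1 < a2 \<and> a2 \<le> a0 \<and> a2 - a1 < \<delta> \<and> b > 0
           \<longrightarrow> K_const (Gamma_set g a1 a2) (R_set g a1 a2 b) \<ge> ereal M"
  proof (intro exI[of _ \<delta>] conjI allI impI \<delta>0)
    fix a1 a2 b :: real assume h: "0 \<le> a1 \<and> a1 < a2 \<and> a2 \<le> a0 \<and> a2 - a1 < \<delta> \<and> b > 0"
    define g' where "g' x = g (max a1 (min a2 x))" for x
    have lip': "L-lipschitz_on UNIV g'" unfolding g'_def[abs_def]
      by (rule clamp_lip[OF assms(2)]) (use h in auto)
    interpret geo g' L a1 a2 b by unfold_locales (use lip' h in auto)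
    have gg: "g' x = g x" if "a1 \<le> x" "x \<le> a2" for x
      using that by (simp add: g'_def)
    have Req: "R_set g a1 a2 b = R" by (auto simp: R_set_def R_def gg)
    have Geq: "Gamma_set g a1 a2 = \<Gamma>"
    proof
      show "Gamma_set g a1 a2 \<subseteq> \<Gamma>" by (auto simp: Gamma_set_def \<Gamma>_def gg)
      show "\<Gamma> \<subseteq> Gamma_set g a1 a2"
      proof
        fix z assume "z \<in> \<Gamma>"
        then have "a1 < fst z" "fst z < a2" "z = (fst z, g (fst z))"
          by (auto simp: \<Gamma>_def gg prod_eq_iff)
        then show "z \<in> Gamma_set g a1 a2" unfolding Gamma_set_def by blast
      qed
    qed
    show "ereal M \<le> K_const (Gamma_set g a1 a2) (R_set g a1 a2 b)"
      unfolding K_const_def Req Geq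
    proof (rule Inf_greatest, clarify)
      fix v w t
      assume Hw: "H1_weak_grad R v w" and Ht: "has_trace R v w t"
        and G1: "(\<integral>\<^sup>+z. ennreal ((t z)\<^sup>2) * indicator \<Gamma> z \<partial>H1) = 1"
        and AEt: "AE z in H1. z \<in> frontier R - \<Gamma> \<longrightarrow> t z = 0"
      define W where "W = (LINT x:R|lborel. (norm (w x))\<^sup>2)"
      have cb: "1 \<le> k * (a2 - a1) * W" unfolding k_def W_def by (rule core_bound[OF Hw Ht G1 AEt])
      have "W > \<bar>M\<bar> + 1"
      proof (rule ccontr)
        assume "\<not> W > \<bar>M\<bar> + 1"
        then have W1: "W \<le> \<bar>M\<bar> + 1" by simp
        have ke: "0 \<le> k * (a2 - a1)" using k0 h by simp
        have "k * (a2 - a1) * W \<le> k * (a2 - a1) * (\<bar>M\<bar> + 1)" using mult_left_mono[OF W1 ke] .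
        also have "\<dots> < k * \<delta> * (\<bar>M\<bar> + 1)" using h k0 by (intro mult_strict_right_mono) auto
        also have "\<dots> = 1" using k0 by (simp add: \<delta>_def)
        finally show False using cb by simp
      qed
      then show "ereal M \<le> ereal (LINT x:R|lborel. (norm (w x))\<^sup>2)" unfolding W_def[symmetric] by simp
    qed
  qed
qed

end
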